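(* In the setting described in the context (general distortion function $g$), suppose that the processes $M=(M_t)_{t=1}^n$ and $L=(L_t)_{t=1}^n$ have the same law. Then for all $t=1,\dots,n$ and $j=1,\dots,m+1$, $$\mathsf E[\mathbf 1_{t,j}]=\frac{\mathsf E\big[G\,\mathbf 1_{\{G\in[\alpha_{j-1},\alpha_j)\}}\big]}{g(\alpha_j)-g(\alpha_{j-1})},$$ and the random vectors $(\mathbf 1_{t,j})_{j=1,\dots,m+1}$, $t=1,\dots,n$, are independent.
   Context: Let $n\ge1$ and let $L=(L_t)_{t=1}^n$ and $M=(M_t)_{t=1}^n$ be real-valued stochastic processes on a probability space $(\Omega,\mathcal F,\mathsf P)$. Assume that for each $t$ the conditional distribution function $F^{t-1}(x):=F_{M_t\mid M_{t-1},\dots,M_1}(x\mid L_{t-1},\dots,L_1)$ (the model's conditional distribution of $M_t$ evaluated at the observations $M_s=L_s$, $s<t$) is continuous in $x$ for all conditioning values. Define $q^{t-1}_{M_t}(u)=\inf\{x:F^{t-1}(x)\ge u\}$ and $q^{+,t-1}_{M_t}(u)=\sup\{x:F^{t-1}(x)\le u\}$. A distortion function is a non-decreasing $g:[0,1]\to[0,1]$ with $g(0)=0$, $g(1)=1$. Let $g$ be a distortion function with (unique) decomposition $g=c_r g_r+c_l g_l+c_c g_c$, where $c_r,c_l,c_c\ge0$ sum to $1$, $c_r g_r(u)=\sum_{r\le u}(g(r)-g(r-))$ collects the left jumps of $g$ (right-continuous step distortion function $g_r$), $c_l g_l(u)=\sum_{l<u}(g(l+)-g(l))$ collects the right jumps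 (left-continuous step distortion function $g_l$), and $g_c$ is a continuous distortion function. Let $G^r,G^l,G^c,C$ be independent, independent of $(L,M)$, with $\mathsf P(G^r\le u)=g_r(u)$, $\mathsf P(G^l<u)=g_l(u)$, $\mathsf P(G^c\le u)=g_c(u)$, and $\mathsf P(C=r)=c_r$, $\mathsf P(C=l)=c_l$, $\mathsf P(C=c)=c_c$; set $G=\mathbf 1_{\{C=r\}}G^r+\mathbf 1_{\{C=l\}}G^l+\mathbf 1_{\{C=c\}}G^c$. Let $0=\alpha_0<\alpha_1<\dots<\alpha_m<\alpha_{m+1}=1$ be a partition such that $g$ is continuous at each $\alpha_j$ and $g(\alpha_j)-g(\alpha_{j-1})\neq0$ for all $j=1,\dots,m+1$. Let $G_{t,j}$ ($t\le n$, $j\le m+1$) have the conditional law of $G$ given $G\in[\alpha_{j-1},\alpha_j)$, and let $C_{t,j}$ be copies of $C$; all $G_{t,j},C_{t,j}$ are mutually independent and independent of $(L,M)$. Define $\mathbf 1_{t,j}=1$ if $$L_t>\mathbf 1_{\{C_{t,j}=r\}}q^{+,t-1}_{M_t}(1-G_{t,j})+\mathbf 1_{\{C_{t,j}\in\{l,c\}\}}q^{t-1}_{M_t}(1-G_{t,j}),$$ and $\mathbf 1_{t,j}=0$ otherwise. *)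

theory Defs
  imports "HOL-Probability.Probability"
begin

text \<open>Labels of the three components of the distortion function (right jumps r, left jumps l, continuous c).\<close>
datatype comp = CompR | CompL | CompC

definition distortion :: "(real \<Rightarrow> real) \<Rightarrow> bool" where
  "distortion g \<longleftrightarrow> mono_on {0..1} g \<and> g 0 = 0 \<and> g 1 = 1 \<and> g ` {0..1} \<subseteq> {0..1}"

definition left_jump :: "(real \<Rightarrow> real) \<Rightarrow> real \<Rightarrow> real" where
  "left_jump g r = g r - Lim (at_left r) g"

definition right_jump :: "(real \<Rightarrow> real) \<Rightarrow> real \<Rightarrow> real" where
  "right_jump g l = Lim (at_right l) g - g l"

definition rc_step_distortion :: "(real \<Rightarrow> real) \<Rightarrow> bool" where
  "rc_step_distortion h \<longleftrightarrow> distortion h \<and> (\<forall>u\<in>{0..<1}. continuous (at_right u) h) \<and>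
     (\<forall>u\<in>{0..1}. h u = (\<Sum>\<^sub>\<infinity>r\<in>{0<..u}. left_jump h r))"

definition lc_step_distortion :: "(real \<Rightarrow> real) \<Rightarrow> bool" where
  "lc_step_distortion h \<longleftrightarrow> distortion h \<and> (\<forall>u\<in>{0<..1}. continuous (at_left u) h) \<and>
     (\<forall>u\<in>{0..1}. h u = (\<Sum>\<^sub>\<infinity>l\<in>{0..<u}. right_jump h l))"

definition distortion_decomp ::
  "(real \<Rightarrow> real) \<Rightarrow> real \<Rightarrow> real \<Rightarrow> real \<Rightarrow> (real \<Rightarrow> real) \<Rightarrow> (real \<Rightarrow> real) \<Rightarrow> (real \<Rightarrow> real) \<Rightarrow> bool"
where
  "distortion_decomp g cr cl cc gr gl gc \<longleftrightarrow>
     distortion g \<and> cr \<ge> 0 \<and> cl \<ge> 0 \<and> cc \<ge> 0 \<and> cr + cl + cc = 1 \<and>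
     rc_step_distortion gr \<and> lc_step_distortion gl \<and> distortion gc \<and> continuous_on {0..1} gc \<and>
     (\<forall>u\<in>{0..1}. g u = cr * gr u + cl * gl u + cc * gc u) \<and>
     (\<forall>u\<in>{0..1}. cr * gr u = (\<Sum>\<^sub>\<infinity>r\<in>{0<..u}. left_jump g r)) \<and>
     (\<forall>u\<in>{0..1}. cl * gl u = (\<Sum>\<^sub>\<infinity>l\<in>{0..<u}. right_jump g l))"

definition hist :: "(nat \<Rightarrow> 'a \<Rightarrow> real) \<Rightarrow> nat \<Rightarrow> 'a \<Rightarrow> (nat \<Rightarrow> real)" where
  "hist X t \<omega> = restrict (\<lambda>s. X s \<omega>) {1..<t}"

definition hist_space :: "nat \<Rightarrow> (nat \<Rightarrow> real) measure" where
  "hist_space t = PiM {1..<t} (\<lambda>_. borel)"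

text \<open>F t h x is a regular conditional distribution function of M_t given (M_1,...,M_{t-1}) = h.\<close>
definition cond_cdf ::
  "'a measure \<Rightarrow> (nat \<Rightarrow> 'a \<Rightarrow> real) \<Rightarrow> nat \<Rightarrow> (nat \<Rightarrow> (nat \<Rightarrow> real) \<Rightarrow> real \<Rightarrow> real) \<Rightarrow> bool"
where
  "cond_cdf P M n F \<longleftrightarrow> (\<forall>t\<in>{1..n}.
     (\<forall>h\<in>space (hist_space t). mono (F t h) \<and> (\<forall>x. continuous (at_right x) (F t h)) \<and>
         (F t h \<longlongrightarrow> 0) at_bot \<and> (F t h \<longlongrightarrow> 1) at_top) \<and>
     (\<forall>x. (\<lambda>h. F t h x) \<in> borel_measurable (hist_space t)) \<and>
     (\<forall>x. \<forall>B\<in>sets (hist_space t).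
         measure P {\<omega>\<in>space P. M t \<omega> \<le> x \<and> hist M t \<omega> \<in> B}
           = (\<integral>\<omega>. indicator B (hist M t \<omega>) * F t (hist M t \<omega>) x \<partial>P)))"

definition lquant :: "(real \<Rightarrow> real) \<Rightarrow> real \<Rightarrow> real" where
  "lquant F u = Inf {x. u \<le> F x}"

definition uquant :: "(real \<Rightarrow> real) \<Rightarrow> real \<Rightarrow> real" where
  "uquant F u = Sup {x. F x \<le> u}"

definition mixG :: "('a \<Rightarrow> real) \<Rightarrow> ('a \<Rightarrow> real) \<Rightarrow> ('a \<Rightarrow> real) \<Rightarrow> ('a \<Rightarrow> comp) \<Rightarrow> 'a \<Rightarrow> real" where
  "mixG Gr Gl Gc C \<omega> = (case C \<omega> of CompR \<Rightarrow> Gr \<omega> | CompL \<Rightarrow> Gl \<omega> | CompC \<Rightarrow> Gc \<omega>)"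

definition viol ::
  "(nat \<Rightarrow> 'a \<Rightarrow> real) \<Rightarrow> (nat \<Rightarrow> (nat \<Rightarrow> real) \<Rightarrow> real \<Rightarrow> real) \<Rightarrow> (nat \<Rightarrow> nat \<Rightarrow> 'a \<Rightarrow> real)
     \<Rightarrow> (nat \<Rightarrow> nat \<Rightarrow> 'a \<Rightarrow> comp) \<Rightarrow> nat \<Rightarrow> nat \<Rightarrow> 'a \<Rightarrow> real"
where
  "viol L F Gt Ct t j \<omega> =
     (if L t \<omega> > (case Ct t j \<omega> of
                    CompR \<Rightarrow> uquant (F t (hist L t \<omega>)) (1 - Gt t j \<omega>)
                  | CompL \<Rightarrow> lquant (F t (hist L t \<omega>)) (1 - Gt t j \<omega>)
                  | CompC \<Rightarrow> lquant (F t (hist L t \<omega>)) (1 - Gt t j \<omega>))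
      then 1 else 0)"

definition pathLM :: "nat \<Rightarrow> (nat \<Rightarrow> 'a \<Rightarrow> real) \<Rightarrow> (nat \<Rightarrow> 'a \<Rightarrow> real) \<Rightarrow> 'a \<Rightarrow> (nat \<Rightarrow> real \<times> real)" where
  "pathLM n L M \<omega> = restrict (\<lambda>t. (L t \<omega>, M t \<omega>)) {1..n}"

definition pathLM_space :: "nat \<Rightarrow> (nat \<Rightarrow> real \<times> real) measure" where
  "pathLM_space n = PiM {1..n} (\<lambda>_. borel \<Otimes>\<^sub>M borel)"

definition path :: "nat \<Rightarrow> (nat \<Rightarrow> 'a \<Rightarrow> real) \<Rightarrow> 'a \<Rightarrow> (nat \<Rightarrow> real)" where
  "path n X \<omega> = restrict (\<lambda>t. X t \<omega>) {1..n}"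

definition path_space :: "nat \<Rightarrow> (nat \<Rightarrow> real) measure" where
  "path_space n = PiM {1..n} (\<lambda>_. borel)"

definition gen_sets :: "'a measure \<Rightarrow> ('a \<Rightarrow> 'b) \<Rightarrow> 'b measure \<Rightarrow> 'a set set" where
  "gen_sets P X N = {X -` A \<inter> space P | A. A \<in> sets N}"

datatype src1 = S1_LM | S1_Gr | S1_Gl | S1_Gc | S1_C
datatype src2 = S2_LM | S2_G nat nat | S2_C nat nat

end

theory Submission
  imports Defs
begin


definition cdfc :: "(real \<Rightarrow> real) \<Rightarrow> bool" where
  "cdfc G \<longleftrightarrow> mono G \<and> continuous_on UNIV G \<and> (G \<longlongrightarrow> 0) at_bot \<and> (G \<longlongrightarrow> 1) at_top"

lemma cdfc_ge0: assumes "cdfc G" shows "0 \<le> G x"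
proof -
  have m: "mono G" and l: "(G \<longlongrightarrow> 0) at_bot" using assms by (auto simp: cdfc_def)
  have ev: "eventually (\<lambda>y. G y \<le> G x) at_bot"
    unfolding eventually_at_bot_linorder using m by (auto intro!: exI[of _ x] simp: mono_def)
  show ?thesis by (rule tendsto_le[OF _ tendsto_const l ev]) simp
qed

lemma cdfc_le1: assumes "cdfc G" shows "G x \<le> 1"
proof -
  have m: "mono G" and l: "(G \<longlongrightarrow> 1) at_top" using assms by (auto simp: cdfc_def)
  have ev: "eventually (\<lambda>y. G x \<le> G y) at_top"
    unfolding eventually_at_top_linorder using m by (auto intro!: exI[of _ x] simp: mono_def)
  show ?thesis by (rule tendsto_le[OF _ l tendsto_const ev]) simp
qed

lemma cdfc_ex_below: assumes "cdfc G" "0 < v" shows "\<exists>N. \<forall>y\<le>N. G y < v"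
proof -
  have l: "(G \<longlongrightarrow> 0) at_bot" using assms by (auto simp: cdfc_def)
  have "eventually (\<lambda>y. G y < v) at_bot" using order_tendstoD(2)[OF l assms(2)] .
  then show ?thesis unfolding eventually_at_bot_linorder .
qed

lemma cdfc_ex_above: assumes "cdfc G" "v < 1" shows "\<exists>N. \<forall>y\<ge>N. v < G y"
proof -
  have l: "(G \<longlongrightarrow> 1) at_top" using assms by (auto simp: cdfc_def)
  have "eventually (\<lambda>y. v < G y) at_top" using order_tendstoD(1)[OF l assms(2)] .
  then show ?thesis unfolding eventually_at_top_linorder .
qed

lemma cdfc_left: assumes "cdfc G" "v < G x" shows "\<exists>y<x. v < G y"
proof -
  have c: "isCont G x" using assms by (auto simp: cdfc_def continuous_on_eq_continuous_at)
  then have "(G \<longlongrightarrow> G x) (at_left x)" by (simp add: isCont_def filterlim_at_split)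
  then have "eventually (\<lambda>y. v < G y) (at_left x)" using order_tendstoD(1) assms(2) by blast
  then obtain b where "b < x" "\<forall>y>b. y < x \<longrightarrow> v < G y" unfolding eventually_at_left_field by auto
  then show ?thesis by (intro exI[of _ "(b+x)/2"]) auto
qed

lemma uq_char_gen:
  assumes G: "cdfc G" and v: "v < 1" and ex: "\<exists>x. G x \<le> v"
  shows "uquant G v < x \<longleftrightarrow> v < G x"
proof -
  have m: "mono G" using G by (simp add: cdfc_def)
  let ?S = "{x. G x \<le> v}"
  obtain N2 where N2: "\<forall>y\<ge>N2. v < G y" using cdfc_ex_above[OF G v] by auto
  have ne: "?S \<noteq> {}" using ex by auto
  have bdd: "bdd_above ?S" unfolding bdd_above_def using N2 by (auto intro!: exI[of _ N2] simp: not_le[symmetric]) (metis nle_le)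
  show ?thesis
  proof
    assume "uquant G v < x"
    then have "x \<notin> ?S" using cSup_upper[OF _ bdd] unfolding uquant_def by force
    then show "v < G x" by simp
  next
    assume "v < G x"
    then obtain y where y: "y < x" "v < G y" using cdfc_left[OF G] by blast
    have "\<forall>z\<in>?S. z \<le> y" using y m by (auto simp: mono_def) (metis less_le_not_le nle_le order.trans)
    then have "Sup ?S \<le> y" by (intro cSup_least[OF ne]) auto
    then show "uquant G v < x" using y unfolding uquant_def by simp
  qed
qed

lemma uq_char:
  assumes G: "cdfc G" and v: "0 < v" "v < 1"
  shows "uquant G v < x \<longleftrightarrow> v < G x"
proof -
  obtain N1 where N1: "\<forall>y\<le>N1. G y < v" using cdfc_ex_below[OF G v(1)] by auto
  show ?thesis by (rule uq_char_gen[OF G v(2)]) (use N1 in \<open>auto intro: less_imp_le\<close>)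
qed

lemma lq_char1:
  assumes G: "cdfc G" and v: "0 < v" "v < 1" and x: "v < G x"
  shows "lquant G v < x"
proof -
  obtain N1 where N1: "\<forall>y\<le>N1. G y < v" using cdfc_ex_below[OF G v(1)] by auto
  have bdd: "bdd_below {x. v \<le> G x}" unfolding bdd_below_def using N1
    by (auto intro!: exI[of _ N1] simp: not_le[symmetric]) (metis nle_le)
  obtain y where y: "y < x" "v < G y" using cdfc_left[OF G x] by blast
  have "Inf {x. v \<le> G x} \<le> y" using y by (intro cInf_lower[OF _ bdd]) auto
  then show ?thesis using y unfolding lquant_def by simp
qed

lemma lq_char2:
  assumes G: "cdfc G" and v: "0 < v" "v < 1" and x: "lquant G v < x"
  shows "v \<le> G x"
proof -
  have m: "mono G" using G by (simp add: cdfc_def)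
  obtain N2 where N2: "\<forall>y\<ge>N2. v < G y" using cdfc_ex_above[OF G v(2)] by auto
  have ne: "{x. v \<le> G x} \<noteq> {}" using N2 by (auto intro!: exI[of _ N2] less_imp_le)
  obtain N1 where N1: "\<forall>y\<le>N1. G y < v" using cdfc_ex_below[OF G v(1)] by auto
  have bdd: "bdd_below {x. v \<le> G x}" unfolding bdd_below_def using N1
    by (auto intro!: exI[of _ N1] simp: not_le[symmetric]) (metis nle_le)
  obtain y where "y \<in> {x. v \<le> G x}" "y < x" using x unfolding lquant_def cInf_less_iff[OF ne bdd] by auto
  then show ?thesis using m by (auto simp: mono_def) (meson less_imp_le order.trans)
qed

lemma uq_val:
  assumes G: "cdfc G" and v: "0 < v" "v < 1"
  shows "G (uquant G v) = v"
proof -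
  let ?s = "uquant G v"
  have le: "G ?s \<le> v" using uq_char[OF G v, of ?s] by simp
  have c: "isCont G ?s" using G by (auto simp: cdfc_def continuous_on_eq_continuous_at)
  then have "(G \<longlongrightarrow> G ?s) (at_right ?s)" by (simp add: isCont_def filterlim_at_split)
  moreover have "eventually (\<lambda>y. v \<le> G y) (at_right ?s)"
    using eventually_at_right_less[of ?s] by eventually_elim (use uq_char[OF G v] in auto)
  ultimately have "v \<le> G ?s" by (rule tendsto_lowerbound) simp
  with le show ?thesis by simp
qed




context
  fixes HS :: "'h measure" and FF :: "'h \<Rightarrow> real \<Rightarrow> real"
  assumes cd: "\<And>h. h \<in> space HS \<Longrightarrow> cdfc (FF h)"
    and mx: "\<And>x. (\<lambda>h. FF h x) \<in> borel_measurable HS"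
begin

lemma mF:
  assumes h: "h \<in> measurable N HS" and x: "x \<in> borel_measurable N"
  shows "(\<lambda>\<omega>. FF (h \<omega>) (x \<omega>)) \<in> borel_measurable N"
proof (rule borel_measurableI_less)
  fix y
  have [measurable]: "\<And>c. (\<lambda>\<omega>. FF (h \<omega>) c) \<in> borel_measurable N"
    using measurable_compose[OF h mx] by simp
  have [measurable]: "x \<in> borel_measurable N" by (rule x)
  have "{\<omega>\<in>space N. FF (h \<omega>) (x \<omega>) < y} =
        {\<omega>\<in>space N. \<exists>r::rat. FF (h \<omega>) (of_rat r) < y \<and> x \<omega> < of_rat r}"
  proof (intro Collect_cong conj_cong refl iffI)
    fix \<omega> assume \<omega>: "\<omega> \<in> space N" and lt: "FF (h \<omega>) (x \<omega>) < y"
    have c: "cdfc (FF (h \<omega>))" using cd measurable_space[OF h \<omega>] .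
    then have "isCont (FF (h \<omega>)) (x \<omega>)" by (auto simp: cdfc_def continuous_on_eq_continuous_at)
    then have "(FF (h \<omega>) \<longlongrightarrow> FF (h \<omega>) (x \<omega>)) (at_right (x \<omega>))"
      by (simp add: isCont_def filterlim_at_split)
    then have "eventually (\<lambda>z. FF (h \<omega>) z < y) (at_right (x \<omega>))" using order_tendstoD(2) lt by blast
    then obtain b where b: "b > x \<omega>" "\<forall>z>x \<omega>. z < b \<longrightarrow> FF (h \<omega>) z < y"
      unfolding eventually_at_right_field by auto
    obtain q where q: "q \<in> \<rat>" "x \<omega> < q" "q < b" using Rats_dense_in_real[OF b(1)] by auto
    then obtain r where "q = of_rat r" by (auto simp: Rats_def)
    then show "\<exists>r::rat. FF (h \<omega>) (of_rat r) < y \<and> x \<omega> < of_rat r" using q b by auto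
  next
    fix \<omega> assume \<omega>: "\<omega> \<in> space N" and "\<exists>r::rat. FF (h \<omega>) (of_rat r) < y \<and> x \<omega> < of_rat r"
    then obtain r where r: "FF (h \<omega>) (of_rat r) < y" "x \<omega> < of_rat r" by auto
    have "mono (FF (h \<omega>))" using cd measurable_space[OF h \<omega>] by (simp add: cdfc_def)
    then have "FF (h \<omega>) (x \<omega>) \<le> FF (h \<omega>) (of_rat r)" using r(2) by (simp add: mono_def)
    then show "FF (h \<omega>) (x \<omega>) < y" using r(1) by simp
  qed
  also have "\<dots> \<in> sets N" by measurable
  finally show "{\<omega>\<in>space N. FF (h \<omega>) (x \<omega>) < y} \<in> sets N" .
qed

lemma rat_below: "\<exists>r::rat. of_rat r \<le> (x::real)"
proof -
  obtain q where q: "q \<in> \<rat>" "x - 1 < q" "q < x" using Rats_dense_in_real[of "x-1" x] by auto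
  then obtain r where "q = of_rat r" by (auto simp: Rats_def)
  then show ?thesis using q by (intro exI[of _ r]) auto
qed

lemma rat_above: "\<exists>r::rat. (x::real) \<le> of_rat r"
proof -
  obtain q where q: "q \<in> \<rat>" "x < q" "q < x+1" using Rats_dense_in_real[of x "x+1"] by auto
  then obtain r where "q = of_rat r" by (auto simp: Rats_def)
  then show ?thesis using q by (intro exI[of _ r]) auto
qed

lemma mUQ:
  assumes h: "h \<in> measurable N HS" and X: "X \<in> borel_measurable N" and v: "v \<in> borel_measurable N"
  shows "{\<omega>\<in>space N. uquant (FF (h \<omega>)) (v \<omega>) < X \<omega>} \<in> sets N"
proof -
  have [measurable]: "\<And>c. (\<lambda>\<omega>. FF (h \<omega>) c) \<in> borel_measurable N"
    using measurable_compose[OF h mx] by simp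
  have [measurable]: "(\<lambda>\<omega>. FF (h \<omega>) (X \<omega>)) \<in> borel_measurable N" by (rule mF[OF h X])
  have [measurable]: "X \<in> borel_measurable N" "v \<in> borel_measurable N" by (rule X, rule v)
  have "{\<omega>\<in>space N. uquant (FF (h \<omega>)) (v \<omega>) < X \<omega>} =
    {\<omega>\<in>space N. (1 \<le> v \<omega> \<and> Sup (UNIV::real set) < X \<omega>) \<or>
       (v \<omega> < 1 \<and> (\<exists>r::rat. FF (h \<omega>) (of_rat r) \<le> v \<omega>) \<and> v \<omega> < FF (h \<omega>) (X \<omega>)) \<or>
       (v \<omega> < 1 \<and> \<not>(\<exists>r::rat. FF (h \<omega>) (of_rat r) \<le> v \<omega>) \<and> Sup ({}::real set) < X \<omega>)}"
  proof (intro Collect_cong conj_cong refl)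
    fix \<omega> assume \<omega>: "\<omega> \<in> space N"
    define G where "G = FF (h \<omega>)"
    have c: "cdfc G" unfolding G_def using cd measurable_space[OF h \<omega>] .
    have m: "mono G" using c by (simp add: cdfc_def)
    show "uquant (FF (h \<omega>)) (v \<omega>) < X \<omega> \<longleftrightarrow> (1 \<le> v \<omega> \<and> Sup (UNIV::real set) < X \<omega>) \<or>
       (v \<omega> < 1 \<and> (\<exists>r::rat. FF (h \<omega>) (of_rat r) \<le> v \<omega>) \<and> v \<omega> < FF (h \<omega>) (X \<omega>)) \<or>
       (v \<omega> < 1 \<and> \<not>(\<exists>r::rat. FF (h \<omega>) (of_rat r) \<le> v \<omega>) \<and> Sup ({}::real set) < X \<omega>)"
    proof (cases "1 \<le> v \<omega>")
      case True
      then have "{x. G x \<le> v \<omega>} = UNIV" using cdfc_le1[OF c] by (auto intro: order.trans)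
      then show ?thesis using True by (simp add: uquant_def G_def[symmetric])
    next
      case False
      show ?thesis
      proof (cases "\<exists>r::rat. G (of_rat r) \<le> v \<omega>")
        case True
        then have "\<exists>x. G x \<le> v \<omega>" by auto
        from uq_char_gen[OF c _ this] False True show ?thesis unfolding G_def[symmetric] by auto
      next
        case nr: False
        have "{x. G x \<le> v \<omega>} = {}"
        proof (rule ccontr)
          assume "{x. G x \<le> v \<omega>} \<noteq> {}"
          then obtain x where x: "G x \<le> v \<omega>" by auto
          obtain r where "of_rat r \<le> x" using rat_below by blast
          then have "G (of_rat r) \<le> v \<omega>" using m x by (meson mono_def order.trans)
          with nr show False by auto
        qed
        then show ?thesis using False nr unfolding G_def[symmetric] by (simp add: uquant_def)
      qed
    qed
  qed
  also have "\<dots> \<in> sets N" by measurable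
  finally show ?thesis .
qed

lemma mLQ:
  assumes h: "h \<in> measurable N HS" and X: "X \<in> borel_measurable N" and v: "v \<in> borel_measurable N"
  shows "{\<omega>\<in>space N. lquant (FF (h \<omega>)) (v \<omega>) < X \<omega>} \<in> sets N"
proof -
  have [measurable]: "\<And>c. (\<lambda>\<omega>. FF (h \<omega>) c) \<in> borel_measurable N"
    using measurable_compose[OF h mx] by simp
  have [measurable]: "X \<in> borel_measurable N" "v \<in> borel_measurable N" by (rule X, rule v)
  have "{\<omega>\<in>space N. lquant (FF (h \<omega>)) (v \<omega>) < X \<omega>} =
    {\<omega>\<in>space N. (v \<omega> \<le> 0 \<and> Inf (UNIV::real set) < X \<omega>) \<or>
       (0 < v \<omega> \<and> (\<exists>r::rat. of_rat r < X \<omega> \<and> v \<omega> \<le> FF (h \<omega>) (of_rat r))) \<or>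
       (0 < v \<omega> \<and> \<not>(\<exists>r::rat. v \<omega> \<le> FF (h \<omega>) (of_rat r)) \<and> Inf ({}::real set) < X \<omega>)}"
  proof (intro Collect_cong conj_cong refl)
    fix \<omega> assume \<omega>: "\<omega> \<in> space N"
    define G where "G = FF (h \<omega>)"
    have c: "cdfc G" unfolding G_def using cd measurable_space[OF h \<omega>] .
    have m: "mono G" using c by (simp add: cdfc_def)
    show "lquant (FF (h \<omega>)) (v \<omega>) < X \<omega> \<longleftrightarrow> (v \<omega> \<le> 0 \<and> Inf (UNIV::real set) < X \<omega>) \<or>
       (0 < v \<omega> \<and> (\<exists>r::rat. of_rat r < X \<omega> \<and> v \<omega> \<le> FF (h \<omega>) (of_rat r))) \<or>
       (0 < v \<omega> \<and> \<not>(\<exists>r::rat. v \<omega> \<le> FF (h \<omega>) (of_rat r)) \<and> Inf ({}::real set) < X \<omega>)"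
    proof (cases "v \<omega> \<le> 0")
      case True
      then have "{x. v \<omega> \<le> G x} = UNIV" using cdfc_ge0[OF c] by (auto intro: order.trans)
      then show ?thesis using True by (simp add: lquant_def G_def[symmetric])
    next
      case False
      show ?thesis
      proof (cases "\<exists>r::rat. v \<omega> \<le> G (of_rat r)")
        case True
        then have ne: "{x. v \<omega> \<le> G x} \<noteq> {}" by auto
        obtain N1 where N1: "\<forall>y\<le>N1. G y < v \<omega>" using cdfc_ex_below[OF c, of "v \<omega>"] False by auto
        have bdd: "bdd_below {x. v \<omega> \<le> G x}" unfolding bdd_below_def using N1
          by (auto intro!: exI[of _ N1] simp: not_le[symmetric]) (metis nle_le)
        have "lquant G (v \<omega>) < X \<omega> \<longleftrightarrow> (\<exists>r::rat. of_rat r < X \<omega> \<and> v \<omega> \<le> G (of_rat r))"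
          unfolding lquant_def cInf_less_iff[OF ne bdd]
        proof safe
          fix y assume y: "v \<omega> \<le> G y" "y < X \<omega>"
          obtain q where q: "q \<in> \<rat>" "y < q" "q < X \<omega>" using Rats_dense_in_real[OF y(2)] by auto
          then obtain r where r: "q = of_rat r" by (auto simp: Rats_def)
          have "G y \<le> G q" using m q by (simp add: mono_def)
          then show "\<exists>r::rat. of_rat r < X \<omega> \<and> v \<omega> \<le> G (of_rat r)" using q y r by (auto intro!: exI[of _ r])
        qed auto
        then show ?thesis using False True unfolding G_def[symmetric] by auto
      next
        case nr: False
        have "{x. v \<omega> \<le> G x} = {}"
        proof (rule ccontr)
          assume "{x. v \<omega> \<le> G x} \<noteq> {}"
          then obtain x where x: "v \<omega> \<le> G x" by auto
          obtain r where "x \<le> of_rat r" using rat_above by blast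
          then have "v \<omega> \<le> G (of_rat r)" using m x by (meson mono_def order.trans)
          with nr show False by auto
        qed
        then show ?thesis using False nr unfolding G_def[symmetric] by (simp add: lquant_def)
      qed
    qed
  qed
  also have "\<dots> \<in> sets N" by measurable
  finally show ?thesis .
qed

end


lemma ceil_approx_ge: "x \<le> real_of_int \<lceil>2^k * x\<rceil> / 2^k"
proof -
  have "2^k * x \<le> real_of_int \<lceil>2^k * x\<rceil>" by (rule le_of_int_ceiling)
  then show ?thesis by (simp add: field_simps)
qed

lemma ceil_approx_le: "real_of_int \<lceil>2^k * x\<rceil> / 2^k \<le> x + (1/2)^k"
proof -
  have "real_of_int \<lceil>2^k * x\<rceil> \<le> 2^k * x + 1" by linarith
  then show ?thesis by (simp add: field_simps power_divide)
qed

lemma ceil_approx_lim: "(\<lambda>k::nat. real_of_int \<lceil>2^k * x\<rceil> / 2^k) \<longlonglongrightarrow> x"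
proof (rule tendsto_sandwich[of "\<lambda>_. x" _ _ "\<lambda>k. x + (1/2)^k"])
  show "\<forall>\<^sub>F k in sequentially. x \<le> real_of_int \<lceil>2^k * x\<rceil> / 2^k" by (simp add: ceil_approx_ge)
  show "\<forall>\<^sub>F k in sequentially. real_of_int \<lceil>2^k * x\<rceil> / 2^k \<le> x + (1/2)^k" by (simp add: ceil_approx_le)
  have "(\<lambda>k. x + (1/2::real)^k) \<longlonglongrightarrow> x + 0" by (intro tendsto_intros) simp
  then show "(\<lambda>k. x + (1/2::real)^k) \<longlonglongrightarrow> x" by simp
qed simp




locale Lm = prob_space P for P :: "'a measure" +

  fixes n m :: nat
    and L M :: "nat \<Rightarrow> 'a \<Rightarrow> real"
    and F :: "nat \<Rightarrow> (nat \<Rightarrow> real) \<Rightarrow> real \<Rightarrow> real"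
    and g gr gl gc :: "real \<Rightarrow> real"
    and cr cl cc :: real
    and Gr Gl Gc :: "'a \<Rightarrow> real"
    and C :: "'a \<Rightarrow> comp"
    and \<alpha> :: "nat \<Rightarrow> real"
    and Gt :: "nat \<Rightarrow> nat \<Rightarrow> 'a \<Rightarrow> real"
    and Ct :: "nat \<Rightarrow> nat \<Rightarrow> 'a \<Rightarrow> comp"
  assumes n: "n \<ge> 1"
    and LM_meas: "\<And>t. t \<in> {1..n} \<Longrightarrow> L t \<in> borel_measurable P \<and> M t \<in> borel_measurable P"
    and F_cond: "cond_cdf P M n F"
    and F_cont: "\<And>t h. t \<in> {1..n} \<Longrightarrow> h \<in> space (hist_space t) \<Longrightarrow> continuous_on UNIV (F t h)"
    and decomp: "distortion_decomp g cr cl cc gr gl gc"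
    and Gr_meas: "Gr \<in> borel_measurable P"
    and Gl_meas: "Gl \<in> borel_measurable P"
    and Gc_meas: "Gc \<in> borel_measurable P"
    and C_meas: "C \<in> measurable P (count_space UNIV)"
    and Gr_law: "\<And>u. u \<in> {0..1} \<Longrightarrow> measure P {\<omega>\<in>space P. Gr \<omega> \<le> u} = gr u"
    and Gl_law: "\<And>u. u \<in> {0..1} \<Longrightarrow> measure P {\<omega>\<in>space P. Gl \<omega> < u} = gl u"
    and Gc_law: "\<And>u. u \<in> {0..1} \<Longrightarrow> measure P {\<omega>\<in>space P. Gc \<omega> \<le> u} = gc u"
    and C_law: "measure P {\<omega>\<in>space P. C \<omega> = CompR} = cr"
               "measure P {\<omega>\<in>space P. C \<omega> = CompL} = cl"
               "measure P {\<omega>\<in>space P. C \<omega> = CompC} = cc"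
    and indep1: "prob_space.indep_sets P
        (\<lambda>i. case i of
              S1_LM \<Rightarrow> gen_sets P (pathLM n L M) (pathLM_space n)
            | S1_Gr \<Rightarrow> gen_sets P Gr borel
            | S1_Gl \<Rightarrow> gen_sets P Gl borel
            | S1_Gc \<Rightarrow> gen_sets P Gc borel
            | S1_C \<Rightarrow> gen_sets P C (count_space UNIV)) UNIV"
    and alpha0: "\<alpha> 0 = 0"
    and alpha1: "\<alpha> (m + 1) = 1"
    and alpha_mono: "\<And>j. j \<le> m \<Longrightarrow> \<alpha> j < \<alpha> (Suc j)"
    and g_cont: "\<And>j. j \<le> m + 1 \<Longrightarrow> continuous (at (\<alpha> j) within {0..1}) g"
    and g_incr: "\<And>j. j \<in> {1..m+1} \<Longrightarrow> g (\<alpha> j) - g (\<alpha> (j - 1)) \<noteq> 0"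
    and Gt_meas: "\<And>t j. t \<in> {1..n} \<Longrightarrow> j \<in> {1..m+1} \<Longrightarrow> Gt t j \<in> borel_measurable P"
    and Gt_law: "\<And>t j A. t \<in> {1..n} \<Longrightarrow> j \<in> {1..m+1} \<Longrightarrow> A \<in> sets borel \<Longrightarrow>
        measure P (Gt t j -` A \<inter> space P) =
          measure P {\<omega>\<in>space P. mixG Gr Gl Gc C \<omega> \<in> A \<inter> {\<alpha> (j - 1)..<\<alpha> j}}
          / measure P {\<omega>\<in>space P. mixG Gr Gl Gc C \<omega> \<in> {\<alpha> (j - 1)..<\<alpha> j}}"
    and Ct_meas: "\<And>t j. t \<in> {1..n} \<Longrightarrow> j \<in> {1..m+1} \<Longrightarrow> Ct t j \<in> measurable P (count_space UNIV)"
    and Ct_law: "\<And>t j. t \<in> {1..n} \<Longrightarrow> j \<in> {1..m+1} \<Longrightarrow>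
        distr P (count_space UNIV) (Ct t j) = distr P (count_space UNIV) C"
    and indep2: "prob_space.indep_sets P
        (\<lambda>i. case i of
              S2_LM \<Rightarrow> gen_sets P (pathLM n L M) (pathLM_space n)
            | S2_G t j \<Rightarrow> gen_sets P (Gt t j) borel
            | S2_C t j \<Rightarrow> gen_sets P (Ct t j) (count_space UNIV))
        ({S2_LM} \<union> {S2_G t j | t j. t \<in> {1..n} \<and> j \<in> {1..m+1}}
                  \<union> {S2_C t j | t j. t \<in> {1..n} \<and> j \<in> {1..m+1}})"
    and same_law: "distr P (path_space n) (path n M) = distr P (path_space n) (path n L)"
begin

lemma space_hist: "space (hist_space t) = (\<Pi>\<^sub>E s\<in>{1..<t}. UNIV)"
  by (simp add: hist_space_def space_PiM)

lemma F_condt: "t \<in> {1..n} \<Longrightarrow> (\<forall>h\<in>space (hist_space t). mono (F t h) \<and> (\<forall>x. continuous (at_right x) (F t h)) \<and>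
         (F t h \<longlongrightarrow> 0) at_bot \<and> (F t h \<longlongrightarrow> 1) at_top) \<and>
     (\<forall>x. (\<lambda>h. F t h x) \<in> borel_measurable (hist_space t)) \<and>
     (\<forall>x. \<forall>B\<in>sets (hist_space t).
         measure P {\<omega>\<in>space P. M t \<omega> \<le> x \<and> hist M t \<omega> \<in> B}
           = (\<integral>\<omega>. indicator B (hist M t \<omega>) * F t (hist M t \<omega>) x \<partial>P))"
  using F_cond unfolding cond_cdf_def by (rule bspec)

lemma F_cdfc: assumes "t \<in> {1..n}" "h \<in> space (hist_space t)" shows "cdfc (F t h)"
proof -
  have "mono (F t h) \<and> (F t h \<longlongrightarrow> 0) at_bot \<and> (F t h \<longlongrightarrow> 1) at_top"
    using F_condt[OF assms(1)] assms(2) by auto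
  then show ?thesis using F_cont[OF assms] unfolding cdfc_def by auto
qed

lemma F_mx: "t \<in> {1..n} \<Longrightarrow> (\<lambda>h. F t h x) \<in> borel_measurable (hist_space t)"
  using F_condt by auto

lemma F_cond_eq: "t \<in> {1..n} \<Longrightarrow> B \<in> sets (hist_space t) \<Longrightarrow>
  measure P {\<omega>\<in>space P. M t \<omega> \<le> x \<and> hist M t \<omega> \<in> B}
           = (\<integral>\<omega>. indicator B (hist M t \<omega>) * F t (hist M t \<omega>) x \<partial>P)"
  using F_condt by auto

lemma F_meas: "t \<in> {1..n} \<Longrightarrow> h \<in> measurable N (hist_space t) \<Longrightarrow> x \<in> borel_measurable N \<Longrightarrow>
   (\<lambda>\<omega>. F t (h \<omega>) (x \<omega>)) \<in> borel_measurable N"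
  by (rule mF[OF F_cdfc F_mx]) auto

lemma hist_meas: assumes t: "t \<in> {1..n}" and X: "\<And>s. s \<in> {1..n} \<Longrightarrow> X s \<in> borel_measurable P"
  shows "hist X t \<in> measurable P (hist_space t)"
  unfolding hist_def hist_space_def
  by (rule measurable_restrict) (use t X in auto)

lemma hist_in_space: "hist X t \<omega> \<in> space (hist_space t)"
  by (simp add: hist_def space_hist)

lemma L_meas[measurable]: "t \<in> {1..n} \<Longrightarrow> L t \<in> borel_measurable P"
  using LM_meas by blast
lemma M_meas[measurable]: "t \<in> {1..n} \<Longrightarrow> M t \<in> borel_measurable P"
  using LM_meas by blast

lemma F_range: "t \<in> {1..n} \<Longrightarrow> h \<in> space (hist_space t) \<Longrightarrow> 0 \<le> F t h x \<and> F t h x \<le> 1"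
  using cdfc_ge0[OF F_cdfc] cdfc_le1[OF F_cdfc] by auto

lemma F_hist_ge0: "t \<in> {1..n} \<Longrightarrow> 0 \<le> F t (hist X t \<omega>) x"
  by (rule conjunct1[OF F_range[OF _ hist_in_space]])
lemma F_hist_le1: "t \<in> {1..n} \<Longrightarrow> F t (hist X t \<omega>) x \<le> 1"
  by (rule conjunct2[OF F_range[OF _ hist_in_space]])


lemma ext_step:
  assumes t: "t \<in> {1..n}" and B: "B \<in> sets (hist_space t)" and D: "finite D"
    and phi: "phi \<in> borel_measurable (hist_space t)" "phi ` space (hist_space t) \<subseteq> D"
  shows "measure P {\<omega>\<in>space P. hist M t \<omega> \<in> B \<and> M t \<omega> \<le> phi (hist M t \<omega>)}
       = (\<integral>\<omega>. indicator B (hist M t \<omega>) * F t (hist M t \<omega>) (phi (hist M t \<omega>)) \<partial>P)"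
proof -
  let ?H = "hist M t"
  have H[measurable]: "?H \<in> measurable P (hist_space t)" by (rule hist_meas[OF t M_meas])
  have Mt[measurable]: "M t \<in> borel_measurable P" using t by simp
  have [measurable]: "phi \<in> borel_measurable (hist_space t)" by (rule phi)
  have B'[measurable]: "B \<in> sets (hist_space t)" by (rule B)
  define Bd where "Bd d = B \<inter> {h\<in>space (hist_space t). phi h = d}" for d
  have Bd[measurable]: "Bd d \<in> sets (hist_space t)" for d unfolding Bd_def by measurable
  define A where "A d = {\<omega>\<in>space P. M t \<omega> \<le> d \<and> ?H \<omega> \<in> Bd d}" for d
  have A[measurable]: "A d \<in> sets P" for d unfolding A_def by measurable
  have "{\<omega>\<in>space P. ?H \<omega> \<in> B \<and> M t \<omega> \<le> phi (?H \<omega>)} = (\<Union>d\<in>D. A d)"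
    using phi(2) hist_in_space[of M t] unfolding A_def Bd_def by (auto simp: image_subset_iff)
  then have "measure P {\<omega>\<in>space P. ?H \<omega> \<in> B \<and> M t \<omega> \<le> phi (?H \<omega>)} = (\<Sum>d\<in>D. measure P (A d))"
    by (simp, intro measure_finite_Union D) (auto simp: disjoint_family_on_def A_def Bd_def)
  also have "\<dots> = (\<Sum>d\<in>D. \<integral>\<omega>. indicator (Bd d) (?H \<omega>) * F t (?H \<omega>) d \<partial>P)"
    unfolding A_def by (intro sum.cong refl F_cond_eq t Bd)
  also have "\<dots> = (\<integral>\<omega>. (\<Sum>d\<in>D. indicator (Bd d) (?H \<omega>) * F t (?H \<omega>) d) \<partial>P)"
  proof (rule Bochner_Integration.integral_sum[symmetric, where f="\<lambda>d \<omega>. indicator (Bd d) (hist M t \<omega>) * F t (hist M t \<omega>) d"])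
    fix d assume "d \<in> D"
    show "integrable P (\<lambda>\<omega>. indicator (Bd d) (?H \<omega>) * F t (?H \<omega>) d)"
    proof (rule integrable_const_bound[where B=1])
      show "AE \<omega> in P. norm (indicator (Bd d) (?H \<omega>) * F t (?H \<omega>) d) \<le> 1"
      proof (intro AE_I2)
        fix \<omega> show "norm (indicator (Bd d) (?H \<omega>) * F t (?H \<omega>) d) \<le> (1::real)"
          using F_hist_ge0[OF t, of M \<omega> d] F_hist_le1[OF t, of M \<omega> d] by (auto simp: indicator_def)
      qed
      show "(\<lambda>\<omega>. indicator (Bd d) (?H \<omega>) * F t (?H \<omega>) d) \<in> borel_measurable P"
        using F_meas[OF t H, of "\<lambda>_. d"] by measurable
    qed
  qed
  also have "\<dots> = (\<integral>\<omega>. indicator B (?H \<omega>) * F t (?H \<omega>) (phi (?H \<omega>)) \<partial>P)"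
  proof (rule Bochner_Integration.integral_cong[OF refl])
    fix \<omega> assume "\<omega> \<in> space P"
    have hs: "?H \<omega> \<in> space (hist_space t)" by (rule hist_in_space)
    have "(\<Sum>d\<in>D. indicator (Bd d) (?H \<omega>) * F t (?H \<omega>) d)
        = (\<Sum>d\<in>D. if phi (?H \<omega>) = d then indicator B (?H \<omega>) * F t (?H \<omega>) (phi (?H \<omega>)) else 0)"
      using hs by (intro sum.cong refl) (auto simp: Bd_def indicator_def)
    also have "\<dots> = indicator B (?H \<omega>) * F t (?H \<omega>) (phi (?H \<omega>))"
      using D phi(2) hs by (simp add: sum.delta image_subset_iff)
    finally show "(\<Sum>d\<in>D. indicator (Bd d) (?H \<omega>) * F t (?H \<omega>) d) = indicator B (?H \<omega>) * F t (?H \<omega>) (phi (?H \<omega>))" .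
  qed
  finally show ?thesis .
qed


lemma KM:
  assumes t: "t \<in> {1..n}" and B[measurable]: "B \<in> sets (hist_space t)" and v: "0 < v" "v < 1"
  shows "measure P {\<omega>\<in>space P. hist M t \<omega> \<in> B \<and> F t (hist M t \<omega>) (M t \<omega>) \<le> v}
       = v * measure P {\<omega>\<in>space P. hist M t \<omega> \<in> B}"
proof -
  let ?H = "hist M t"
  let ?HS = "hist_space t"
  have H[measurable]: "?H \<in> measurable P ?HS" by (rule hist_meas[OF t M_meas])
  have Mt[measurable]: "M t \<in> borel_measurable P" using t by simp
  define s where "s h = uquant (F t h) v" for h
  have s_char: "F t h x \<le> v \<longleftrightarrow> x \<le> s h" if "h \<in> space ?HS" for h x
    using uq_char[OF F_cdfc[OF t that] v, of x] by (auto simp: s_def not_less[symmetric])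
  have s_val: "F t h (s h) = v" if "h \<in> space ?HS" for h
    using uq_val[OF F_cdfc[OF t that] v] by (simp add: s_def)
  have [measurable]: "(\<lambda>h. F t h x) \<in> borel_measurable ?HS" for x by (rule F_mx[OF t])
  have s_meas[measurable]: "s \<in> borel_measurable ?HS"
  proof (rule borel_measurableI_less)
    fix w
    have "{h\<in>space ?HS. s h < w} = {h\<in>space ?HS. v < F t h w}"
      using uq_char[OF F_cdfc[OF t] v] by (auto simp: s_def)
    also have "\<dots> \<in> sets ?HS" by measurable
    finally show "{h\<in>space ?HS. s h < w} \<in> sets ?HS" .
  qed
  define phi where "phi k h = (if \<bar>s h\<bar> \<le> real k then real_of_int \<lceil>2^k * s h\<rceil> / 2^k else 0)" for k :: nat and h
  define Bk where "Bk k = B \<inter> {h\<in>space ?HS. \<bar>s h\<bar> \<le> real k}" for k :: nat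
  have phi_meas[measurable]: "phi k \<in> borel_measurable ?HS" for k unfolding phi_def by measurable
  have Bk_sets[measurable]: "Bk k \<in> sets ?HS" for k unfolding Bk_def by measurable
  have phi_D: "phi k ` space ?HS \<subseteq> (\<lambda>z. real_of_int z / 2^k) ` {-(int k * 2^k) .. int k * 2^k + 1}" for k
  proof safe
    fix h assume "h \<in> space ?HS"
    show "phi k h \<in> (\<lambda>z. real_of_int z / 2^k) ` {-(int k * 2^k) .. int k * 2^k + 1}"
    proof (cases "\<bar>s h\<bar> \<le> real k")
      case True
      let ?z = "\<lceil>2^k * s h\<rceil>"
      have a: "2^k * s h \<le> real_of_int ?z" "real_of_int ?z < 2^k * s h + 1" by linarith+
      have b1: "- s h * 2^k \<le> real k * 2^k" "s h * 2^k \<le> real k * 2^k"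
        using True by (intro mult_right_mono; simp add: abs_le_iff)+
      have b: "- (real k * 2^k) \<le> 2^k * s h" "2^k * s h \<le> real k * 2^k"
        using b1 by (simp_all add: mult.commute)
      have e1: "real_of_int (-(int k * 2^k)) = - (real k * 2^k)" by simp
      have e2: "real_of_int (int k * 2^k + 1) = real k * 2^k + 1" by simp
      have "real_of_int (-(int k * 2^k)) \<le> real_of_int ?z" using a b e1 by linarith
      then have z1: "-(int k * 2^k) \<le> ?z" by linarith
      have "real_of_int ?z < real_of_int (int k * 2^k + 1)" using a b e2 by linarith
      then have z2: "?z \<le> int k * 2^k + 1" by linarith
      show ?thesis using True z1 z2 by (auto simp: phi_def)
    next
      case False
      then show ?thesis by (auto simp: phi_def intro!: image_eqI[of _ _ 0])
    qed
  qed
  have step: "measure P {\<omega>\<in>space P. ?H \<omega> \<in> Bk k \<and> M t \<omega> \<le> phi k (?H \<omega>)}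
     = (\<integral>\<omega>. indicator (Bk k) (?H \<omega>) * F t (?H \<omega>) (phi k (?H \<omega>)) \<partial>P)" for k
    by (rule ext_step[OF t Bk_sets _ phi_meas phi_D]) simp
  have ev_k: "eventually (\<lambda>k. \<bar>s h\<bar> \<le> real k) sequentially" for h
  proof -
    obtain N where "\<bar>s h\<bar> \<le> real N" using real_arch_simple by blast
    then show ?thesis unfolding eventually_sequentially by (intro exI[of _ N]) auto
  qed
  have phi_lim: "(\<lambda>k. phi k h) \<longlonglongrightarrow> s h" for h
  proof -
    have "eventually (\<lambda>k. real_of_int \<lceil>2^k * s h\<rceil> / 2^k = phi k h) sequentially"
      using ev_k[of h] by eventually_elim (simp add: phi_def)
    then show ?thesis by (rule tendsto_cong[THEN iffD1, OF _ ceil_approx_lim])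
  qed
  have phi_ge: "\<bar>s h\<bar> \<le> real k \<Longrightarrow> s h \<le> phi k h" for h k
    by (simp add: phi_def ceil_approx_ge)
  define E where "E = {\<omega>\<in>space P. ?H \<omega> \<in> B \<and> M t \<omega> \<le> s (?H \<omega>)}"
  have E_sets[measurable]: "E \<in> sets P" unfolding E_def by measurable
  define Ek where "Ek k = {\<omega>\<in>space P. ?H \<omega> \<in> Bk k \<and> M t \<omega> \<le> phi k (?H \<omega>)}" for k
  have Ek_sets[measurable]: "Ek k \<in> sets P" for k unfolding Ek_def by measurable
  have lim1: "(\<lambda>k. (\<integral>\<omega>. indicator (Ek k) \<omega> \<partial>P)::real) \<longlonglongrightarrow> (\<integral>\<omega>. indicator E \<omega> \<partial>P)"
  proof (rule Bochner_Integration.integral_dominated_convergence[where w="\<lambda>_. 1"])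
    show "AE \<omega> in P. (\<lambda>k. indicator (Ek k) \<omega> :: real) \<longlonglongrightarrow> indicator E \<omega>"
    proof (rule AE_I2)
      fix \<omega> assume \<omega>: "\<omega> \<in> space P"
      show "(\<lambda>k. indicator (Ek k) \<omega> :: real) \<longlonglongrightarrow> indicator E \<omega>"
      proof (cases "?H \<omega> \<in> B")
        case False
        then show ?thesis by (simp add: Ek_def E_def Bk_def indicator_def)
      next
        case inB: True
        show ?thesis
        proof (cases "M t \<omega> \<le> s (?H \<omega>)")
          case True
          have "eventually (\<lambda>k. (indicator (Ek k) \<omega> :: real) = 1) sequentially"
            using ev_k[of "?H \<omega>"]
          proof eventually_elim
            case (elim k)
            then show ?case using inB True \<omega> phi_ge[OF elim] hist_in_space[of M t \<omega>]
              by (auto simp: Ek_def Bk_def indicator_def)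
          qed
          moreover have "indicator E \<omega> = (1::real)" using \<omega> inB True by (simp add: E_def)
          ultimately show ?thesis by (simp add: tendsto_eventually)
        next
          case False
          have "eventually (\<lambda>k. phi k (?H \<omega>) < M t \<omega>) sequentially"
            using order_tendstoD(2)[OF phi_lim] False by simp
          then have "eventually (\<lambda>k. (indicator (Ek k) \<omega> :: real) = 0) sequentially"
            by eventually_elim (auto simp: Ek_def indicator_def)
          moreover have "indicator E \<omega> = (0::real)" using \<omega> False by (simp add: E_def)
          ultimately show ?thesis by (simp add: tendsto_eventually)
        qed
      qed
    qed
  qed (auto simp: indicator_def)
  have lim2: "(\<lambda>k. \<integral>\<omega>. indicator (Bk k) (?H \<omega>) * F t (?H \<omega>) (phi k (?H \<omega>)) \<partial>P)
      \<longlonglongrightarrow> (\<integral>\<omega>. indicator B (?H \<omega>) * v \<partial>P)"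
  proof (rule Bochner_Integration.integral_dominated_convergence[where w="\<lambda>_. 1"])
    show "(\<lambda>\<omega>. indicator (Bk k) (?H \<omega>) * F t (?H \<omega>) (phi k (?H \<omega>))) \<in> borel_measurable P" for k
      using F_meas[OF t H, of "\<lambda>\<omega>. phi k (?H \<omega>)"] by measurable
    show "AE \<omega> in P. norm (indicator (Bk k) (?H \<omega>) * F t (?H \<omega>) (phi k (?H \<omega>))) \<le> 1" for k
    proof (intro AE_I2)
      fix \<omega> show "norm (indicator (Bk k) (?H \<omega>) * F t (?H \<omega>) (phi k (?H \<omega>))) \<le> (1::real)"
        using F_hist_ge0[OF t, of M \<omega> "phi k (?H \<omega>)"] F_hist_le1[OF t, of M \<omega> "phi k (?H \<omega>)"]
        by (auto simp: indicator_def)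
    qed
    show "AE \<omega> in P. (\<lambda>k. indicator (Bk k) (?H \<omega>) * F t (?H \<omega>) (phi k (?H \<omega>))) \<longlonglongrightarrow> indicator B (?H \<omega>) * v"
    proof (rule AE_I2)
      fix \<omega> assume \<omega>: "\<omega> \<in> space P"
      have hs: "?H \<omega> \<in> space ?HS" by (rule hist_in_space)
      show "(\<lambda>k. indicator (Bk k) (?H \<omega>) * F t (?H \<omega>) (phi k (?H \<omega>))) \<longlonglongrightarrow> indicator B (?H \<omega>) * v"
      proof (cases "?H \<omega> \<in> B")
        case False
        then show ?thesis by (simp add: Bk_def)
      next
        case True
        have c: "isCont (F t (?H \<omega>)) (s (?H \<omega>))"
          using F_cdfc[OF t hs] by (auto simp: cdfc_def continuous_on_eq_continuous_at)
        have "(\<lambda>k. F t (?H \<omega>) (phi k (?H \<omega>))) \<longlonglongrightarrow> F t (?H \<omega>) (s (?H \<omega>))"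
          by (rule isCont_tendsto_compose[OF c phi_lim])
        then have l: "(\<lambda>k. F t (?H \<omega>) (phi k (?H \<omega>))) \<longlonglongrightarrow> v" using s_val[OF hs] by simp
        have "eventually (\<lambda>k. F t (?H \<omega>) (phi k (?H \<omega>)) = indicator (Bk k) (?H \<omega>) * F t (?H \<omega>) (phi k (?H \<omega>))) sequentially"
          using ev_k[of "?H \<omega>"] by eventually_elim (use True hs in \<open>simp add: Bk_def\<close>)
        then have "(\<lambda>k. indicator (Bk k) (?H \<omega>) * F t (?H \<omega>) (phi k (?H \<omega>))) \<longlonglongrightarrow> v"
          by (rule tendsto_cong[THEN iffD1, OF _ l])
        then show ?thesis using True by simp
      qed
    qed
  qed auto
  have "(\<lambda>k. (\<integral>\<omega>. indicator (Ek k) \<omega> \<partial>P)::real) = (\<lambda>k. \<integral>\<omega>. indicator (Bk k) (?H \<omega>) * F t (?H \<omega>) (phi k (?H \<omega>)) \<partial>P)"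
    using step by (simp add: Ek_def[symmetric] Int_absorb2 sets.sets_into_space)
  with lim1 have "(\<lambda>k. \<integral>\<omega>. indicator (Bk k) (?H \<omega>) * F t (?H \<omega>) (phi k (?H \<omega>)) \<partial>P) \<longlonglongrightarrow> (\<integral>\<omega>. indicator E \<omega> \<partial>P)"
    by simp
  then have "(\<integral>\<omega>. indicator E \<omega> \<partial>P) = (\<integral>\<omega>. indicator B (?H \<omega>) * v \<partial>P)"
    using lim2 by (rule LIMSEQ_unique)
  also have "\<dots> = (\<integral>\<omega>. indicator {\<omega>\<in>space P. ?H \<omega> \<in> B} \<omega> * v \<partial>P)"
    by (rule Bochner_Integration.integral_cong) (auto simp: indicator_def)
  also have "\<dots> = v * measure P {\<omega>\<in>space P. ?H \<omega> \<in> B}" by simp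
  finally have "measure P E = v * measure P {\<omega>\<in>space P. ?H \<omega> \<in> B}"
    by (simp add: Int_absorb2 E_def)
  moreover have "E = {\<omega>\<in>space P. ?H \<omega> \<in> B \<and> F t (?H \<omega>) (M t \<omega>) \<le> v}"
    using s_char hist_in_space[of M t] by (auto simp: E_def)
  ultimately show ?thesis by simp
qed


definition clp :: "real \<Rightarrow> real" where "clp x = max 0 (min 1 x)"

definition U where "U t \<omega> = F t (hist L t \<omega>) (L t \<omega>)"

lemma U_meas[measurable]: "t \<in> {1..n} \<Longrightarrow> U t \<in> borel_measurable P"
  unfolding U_def by (rule F_meas[OF _ hist_meas[OF _ L_meas] L_meas]) auto

lemma U_ge0: "t \<in> {1..n} \<Longrightarrow> 0 \<le> U t \<omega>" unfolding U_def by (rule F_hist_ge0)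
lemma U_le1: "t \<in> {1..n} \<Longrightarrow> U t \<omega> \<le> 1" unfolding U_def by (rule F_hist_le1)

lemma Phi_meas:
  assumes s: "s \<in> {1..n}" "s \<in> I" "{1..<s} \<subseteq> I"
  shows "(\<lambda>p. F s (restrict p {1..<s}) (p s)) \<in> borel_measurable (PiM I (\<lambda>_. borel))"
proof (rule F_meas[OF s(1)])
  show "(\<lambda>p. restrict p {1..<s}) \<in> measurable (PiM I (\<lambda>_. borel)) (hist_space s)"
    unfolding hist_space_def by (rule measurable_restrict) (use s in \<open>auto intro!: measurable_component_singleton\<close>)
  show "(\<lambda>p. p s) \<in> borel_measurable (PiM I (\<lambda>_. borel))"
    using s by (auto intro!: measurable_component_singleton)
qed

lemma path_meas: "(\<And>s. s \<in> {1..n} \<Longrightarrow> X s \<in> borel_measurable P) \<Longrightarrow> path n X \<in> measurable P (path_space n)"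
  unfolding path_def path_space_def by (rule measurable_restrict) auto

lemma path_transfer:
  assumes S: "S \<in> sets (path_space n)"
  shows "measure P (path n L -` S \<inter> space P) = measure P (path n M -` S \<inter> space P)"
proof -
  have "measure P (path n L -` S \<inter> space P) = measure (distr P (path_space n) (path n L)) S"
    by (rule measure_distr[symmetric, OF path_meas[OF L_meas] S])
  also have "\<dots> = measure (distr P (path_space n) (path n M)) S" by (simp add: same_law)
  also have "\<dots> = measure P (path n M -` S \<inter> space P)"
    by (rule measure_distr[OF path_meas[OF M_meas] S])
  finally show ?thesis .
qed

lemma restrict_path: "t \<in> {1..n} \<Longrightarrow> restrict (path n X \<omega>) {1..<t} = hist X t \<omega>"
  by (auto simp: path_def hist_def restrict_def fun_eq_iff)

lemma restrict_path0: "t \<in> {1..n} \<Longrightarrow> restrict (path n X \<omega>) {Suc 0..<t} = hist X t \<omega>"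
  using restrict_path[of t X \<omega>] by simp

lemma path_at: "t \<in> {1..n} \<Longrightarrow> path n X \<omega> t = X t \<omega>"
  by (auto simp: path_def)

lemma path_space_in: "path n X \<omega> \<in> space (path_space n)"
  by (simp add: path_def path_space_def space_PiM)

lemma KL:
  assumes t: "t \<in> {1..n}" and B[measurable]: "B \<in> sets (hist_space t)" and v: "0 < v" "v < 1"
  shows "measure P {\<omega>\<in>space P. hist L t \<omega> \<in> B \<and> U t \<omega> \<le> v}
       = v * measure P {\<omega>\<in>space P. hist L t \<omega> \<in> B}"
proof -
  have R[measurable]: "(\<lambda>p. restrict p {1..<t}) \<in> measurable (path_space n) (hist_space t)"
    unfolding hist_space_def path_space_def
    by (rule measurable_restrict) (use t in \<open>auto intro!: measurable_component_singleton\<close>)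
  have Ph[measurable]: "(\<lambda>p. F t (restrict p {1..<t}) (p t)) \<in> borel_measurable (path_space n)"
    unfolding path_space_def by (rule Phi_meas) (use t in auto)
  define S1 where "S1 = {p\<in>space (path_space n). restrict p {1..<t} \<in> B \<and> F t (restrict p {1..<t}) (p t) \<le> v}"
  define S2 where "S2 = {p\<in>space (path_space n). restrict p {1..<t} \<in> B}"
  have S1[measurable]: "S1 \<in> sets (path_space n)" unfolding S1_def by measurable
  have S2[measurable]: "S2 \<in> sets (path_space n)" unfolding S2_def by measurable
  have e1: "{\<omega>\<in>space P. hist X t \<omega> \<in> B \<and> F t (hist X t \<omega>) (X t \<omega>) \<le> v} = path n X -` S1 \<inter> space P" for X
    using path_space_in[of X] by (auto simp: S1_def restrict_path0[OF t] path_at[OF t])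
  have e2: "{\<omega>\<in>space P. hist X t \<omega> \<in> B} = path n X -` S2 \<inter> space P" for X
    using path_space_in[of X] by (auto simp: S2_def restrict_path0[OF t])
  have "measure P {\<omega>\<in>space P. hist L t \<omega> \<in> B \<and> U t \<omega> \<le> v}
      = measure P {\<omega>\<in>space P. hist M t \<omega> \<in> B \<and> F t (hist M t \<omega>) (M t \<omega>) \<le> v}"
    unfolding U_def e1 by (rule path_transfer[OF S1])
  also have "\<dots> = v * measure P {\<omega>\<in>space P. hist M t \<omega> \<in> B}" by (rule KM[OF t B v])
  also have "\<dots> = v * measure P {\<omega>\<in>space P. hist L t \<omega> \<in> B}"
    unfolding e2 by (simp add: path_transfer[OF S2])
  finally show ?thesis .
qed

lemma KL_cl:
  assumes t: "t \<in> {1..n}" and B[measurable]: "B \<in> sets (hist_space t)"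
  shows "measure P {\<omega>\<in>space P. hist L t \<omega> \<in> B \<and> U t \<omega> \<le> x}
       = clp x * measure P {\<omega>\<in>space P. hist L t \<omega> \<in> B}"
proof -
  have H[measurable]: "hist L t \<in> measurable P (hist_space t)" by (rule hist_meas[OF t L_meas])
  have Ut[measurable]: "U t \<in> borel_measurable P" using t by simp
  consider "x < 0" | "x = 0" | "0 < x \<and> x < 1" | "1 \<le> x" by linarith
  then show ?thesis
  proof cases
    case 1
    have "\<not> U t \<omega> \<le> x" for \<omega> using U_ge0[OF t, of \<omega>] 1 by linarith
    then have e: "{\<omega>\<in>space P. hist L t \<omega> \<in> B \<and> U t \<omega> \<le> x} = {}" by auto
    show ?thesis using 1 by (subst e) (simp add: clp_def)
  next
    case 3 then show ?thesis using KL[OF t B] by (simp add: clp_def)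
  next
    case 4
    then have "{\<omega>\<in>space P. hist L t \<omega> \<in> B \<and> U t \<omega> \<le> x} = {\<omega>\<in>space P. hist L t \<omega> \<in> B}"
      using U_le1[OF t] by (auto intro: order.trans)
    then show ?thesis using 4 by (simp add: clp_def)
  next
    case 2
    let ?p = "measure P {\<omega>\<in>space P. hist L t \<omega> \<in> B \<and> U t \<omega> \<le> 0}"
    have le: "?p \<le> y" if y: "0 < y" "y < 1" for y
    proof -
      have "?p \<le> measure P {\<omega>\<in>space P. hist L t \<omega> \<in> B \<and> U t \<omega> \<le> y}"
        using y by (intro finite_measure_mono) auto
      also have "\<dots> = y * measure P {\<omega>\<in>space P. hist L t \<omega> \<in> B}" by (rule KL[OF t B y])
      also have "\<dots> \<le> y * 1" using y by (intro mult_left_mono) auto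
      finally show ?thesis by simp
    qed
    have "?p \<le> 0"
    proof (rule ccontr)
      assume "\<not> ?p \<le> 0"
      have p1: "?p \<le> 1" by (rule prob_le_1)
      have a: "0 < min (1/2) (?p/2)" using \<open>\<not> ?p \<le> 0\<close> by simp
      have b: "min (1/2) (?p/2) < 1" using min.cobounded1[of "1/2::real" "?p/2"] by linarith
      have "?p \<le> min (1/2) (?p/2)" by (rule le[OF a b])
      with \<open>\<not> ?p \<le> 0\<close> show False by linarith
    qed
    then have "?p = 0" using measure_nonneg[of P] by (simp add: antisym)
    then show ?thesis using 2 by (simp add: clp_def)
  qed
qed

lemma KL_gt:
  assumes t: "t \<in> {1..n}" and B[measurable]: "B \<in> sets (hist_space t)"
  shows "measure P {\<omega>\<in>space P. hist L t \<omega> \<in> B \<and> x < U t \<omega>}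
       = (1 - clp x) * measure P {\<omega>\<in>space P. hist L t \<omega> \<in> B}"
proof -
  have H[measurable]: "hist L t \<in> measurable P (hist_space t)" by (rule hist_meas[OF t L_meas])
  have Ut[measurable]: "U t \<in> borel_measurable P" using t by simp
  have "measure P {\<omega>\<in>space P. hist L t \<omega> \<in> B} =
    measure P ({\<omega>\<in>space P. hist L t \<omega> \<in> B \<and> U t \<omega> \<le> x} \<union> {\<omega>\<in>space P. hist L t \<omega> \<in> B \<and> x < U t \<omega>})"
    by (intro arg_cong[where f="measure P"]) auto
  also have "\<dots> = measure P {\<omega>\<in>space P. hist L t \<omega> \<in> B \<and> U t \<omega> \<le> x} + measure P {\<omega>\<in>space P. hist L t \<omega> \<in> B \<and> x < U t \<omega>}"
    by (intro finite_measure_Union) auto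
  finally show ?thesis using KL_cl[OF t B, of x] by (simp add: algebra_simps)
qed


lemma restrict_hist: "s \<le> t \<Longrightarrow> restrict (hist X t \<omega>) {1..<s} = hist X s \<omega>"
  by (auto simp: hist_def restrict_def fun_eq_iff)

lemma hist_at: "s \<in> {1..<t} \<Longrightarrow> hist X t \<omega> s = X s \<omega>"
  by (auto simp: hist_def)

lemma U_prod:
  "k \<le> n \<Longrightarrow> J \<subseteq> {1..k} \<Longrightarrow>
   measure P (space P \<inter> (\<Inter>t\<in>J. {\<omega>\<in>space P. x t < U t \<omega>})) = (\<Prod>t\<in>J. 1 - clp (x t))"
proof (induction k arbitrary: J)
  case 0
  then have "J = {}" by auto
  then show ?case by (simp add: prob_space)
next
  case (Suc k)
  show ?case
  proof (cases "Suc k \<in> J")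
    case False
    then have "J \<subseteq> {1..k}" using Suc.prems by (auto simp: le_Suc_eq)
    then show ?thesis using Suc.IH Suc.prems by simp
  next
    case True
    define t where "t = Suc k"
    define J' where "J' = J - {t}"
    have t: "t \<in> {1..n}" using Suc.prems by (simp add: t_def)
    have J': "J' \<subseteq> {1..k}" using Suc.prems by (auto simp: J'_def t_def le_Suc_eq)
    have fJ: "finite J" using Suc.prems(2) finite_subset by blast
    define B where "B = {h\<in>space (hist_space t). \<forall>s\<in>J'. x s < F s (restrict h {1..<s}) (h s)}"
    have B[measurable]: "B \<in> sets (hist_space t)" unfolding B_def
    proof (rule sets.sets_Collect_finite_All)
      show "finite J'" using J' finite_subset by blast
      fix s assume s: "s \<in> J'"
      have "(\<lambda>h. F s (restrict h {1..<s}) (h s)) \<in> borel_measurable (hist_space t)"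
        unfolding hist_space_def by (rule Phi_meas) (use s J' t in \<open>auto simp: t_def\<close>)
      then show "{h \<in> space (hist_space t). x s < F s (restrict h {1..<s}) (h s)} \<in> sets (hist_space t)"
        by measurable
    qed
    have Ut[measurable]: "U t \<in> borel_measurable P" using t by simp
    have key: "F s (restrict (hist L t \<omega>) {1..<s}) (hist L t \<omega> s) = U s \<omega>" if s: "s \<in> J'" for s \<omega>
    proof -
      have s1: "s \<le> t" "s \<in> {1..<t}" using s J' by (auto simp: t_def)
      show ?thesis unfolding U_def restrict_hist[OF s1(1)] hist_at[OF s1(2)] ..
    qed
    have e1: "space P \<inter> (\<Inter>s\<in>J. {\<omega>\<in>space P. x s < U s \<omega>}) = {\<omega>\<in>space P. hist L t \<omega> \<in> B \<and> x t < U t \<omega>}"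
    proof -
      have "hist L t \<omega> \<in> B \<longleftrightarrow> (\<forall>s\<in>J'. x s < U s \<omega>)" for \<omega>
        unfolding B_def using hist_in_space[of L t \<omega>] key[of _ \<omega>] by auto
      then show ?thesis using True by (auto simp: J'_def t_def)
    qed
    have e2: "{\<omega>\<in>space P. hist L t \<omega> \<in> B} = space P \<inter> (\<Inter>s\<in>J'. {\<omega>\<in>space P. x s < U s \<omega>})"
    proof -
      have "hist L t \<omega> \<in> B \<longleftrightarrow> (\<forall>s\<in>J'. x s < U s \<omega>)" for \<omega>
        unfolding B_def using hist_in_space[of L t \<omega>] key[of _ \<omega>] by auto
      then show ?thesis by auto
    qed
    have "measure P (space P \<inter> (\<Inter>s\<in>J. {\<omega>\<in>space P. x s < U s \<omega>}))
        = (1 - clp (x t)) * measure P {\<omega>\<in>space P. hist L t \<omega> \<in> B}"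
      unfolding e1 by (rule KL_gt[OF t B])
    also have "\<dots> = (1 - clp (x t)) * (\<Prod>s\<in>J'. 1 - clp (x s))"
      unfolding e2 using Suc.IH[OF _ J'] Suc.prems by simp
    also have "\<dots> = (\<Prod>s\<in>J. 1 - clp (x s))"
      using fJ True by (simp add: J'_def t_def prod.remove)
    finally show ?thesis .
  qed
qed

lemma U_prob: "t \<in> {1..n} \<Longrightarrow> measure P {\<omega>\<in>space P. x < U t \<omega>} = 1 - clp x"
  using U_prod[of n "{t}" "\<lambda>_. x"] by (simp add: Int_absorb1)

lemma U_indep: "indep_sets (\<lambda>t. {{\<omega>\<in>space P. x < U t \<omega>} | x. True}) {1..n}"
proof (rule indep_setsI)
  fix t assume "t \<in> {1..n}"
  then show "{{\<omega>\<in>space P. x < U t \<omega>} | x. True} \<subseteq> events" by auto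
next
  fix A J assume J: "J \<noteq> {}" "J \<subseteq> {1..n}" "finite J" and A: "\<forall>j\<in>J. A j \<in> {{\<omega>\<in>space P. x < U j \<omega>} | x. True}"
  then have "\<forall>j\<in>J. \<exists>x. A j = {\<omega>\<in>space P. x < U j \<omega>}" by blast
  from bchoice[OF this] obtain x where x': "\<forall>j\<in>J. A j = {\<omega>\<in>space P. x j < U j \<omega>}" by (erule exE)
  then have x: "\<And>j. j \<in> J \<Longrightarrow> A j = {\<omega>\<in>space P. x j < U j \<omega>}" by blast
  have "(\<Inter>j\<in>J. A j) = space P \<inter> (\<Inter>j\<in>J. {\<omega>\<in>space P. x j < U j \<omega>})" using J x by auto
  then have "prob (\<Inter>j\<in>J. A j) = (\<Prod>j\<in>J. 1 - clp (x j))" using U_prod[of n J x] J by simp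
  also have "\<dots> = (\<Prod>j\<in>J. prob (A j))" using x J U_prob by (intro prod.cong) auto
  finally show "prob (\<Inter>j\<in>J. A j) = (\<Prod>j\<in>J. prob (A j))" .
qed


lemma Gt_meas'[measurable]: "t \<in> {1..n} \<Longrightarrow> j \<in> {1..m+1} \<Longrightarrow> Gt t j \<in> borel_measurable P"
  by (rule Gt_meas)

lemma pathLM_in: "pathLM n L M \<omega> \<in> space (pathLM_space n)"
  by (simp add: pathLM_def pathLM_space_def space_PiM space_pair_measure)

lemma keyLM: "t \<in> {1..n} \<Longrightarrow>
  F t (restrict (\<lambda>s. fst (pathLM n L M \<omega> s)) {1..<t}) (fst (pathLM n L M \<omega> t)) = U t \<omega>"
proof -
  assume t: "t \<in> {1..n}"
  have "restrict (\<lambda>s. fst (pathLM n L M \<omega> s)) {1..<t} = hist L t \<omega>"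
    using t by (auto simp: pathLM_def hist_def restrict_def fun_eq_iff)
  moreover have "fst (pathLM n L M \<omega> t) = L t \<omega>" using t by (simp add: pathLM_def)
  ultimately show ?thesis by (simp add: U_def)
qed

lemma U_gen:
  assumes J0: "finite J0" "J0 \<subseteq> {1..n}"
  shows "space P \<inter> (\<Inter>t\<in>J0. {\<omega>\<in>space P. x t < U t \<omega>}) \<in> gen_sets P (pathLM n L M) (pathLM_space n)"
proof -
  define S where "S = {p\<in>space (pathLM_space n). \<forall>t\<in>J0. x t < F t (restrict (\<lambda>s. fst (p s)) {1..<t}) (fst (p t))}"
  have S: "S \<in> sets (pathLM_space n)" unfolding S_def
  proof (rule sets.sets_Collect_finite_All[OF _ J0(1)])
    fix t assume t: "t \<in> J0"
    then have t': "t \<in> {1..n}" using J0 by auto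
    have c: "(\<lambda>p. fst (p s)) \<in> borel_measurable (pathLM_space n)" if "s \<in> {1..n}" for s
      unfolding pathLM_space_def
    proof (rule measurable_compose[of "\<lambda>p. p s" _ "borel \<Otimes>\<^sub>M borel" fst])
      show "(\<lambda>p. p s) \<in> measurable (PiM {1..n} (\<lambda>_. borel \<Otimes>\<^sub>M borel)) (borel \<Otimes>\<^sub>M borel)"
        by (rule measurable_component_singleton) (use that in auto)
    qed (rule measurable_fst)
    have "(\<lambda>p. F t (restrict (\<lambda>s. fst (p s)) {1..<t}) (fst (p t))) \<in> borel_measurable (pathLM_space n)"
    proof (rule F_meas[OF t'])
      show "(\<lambda>p. restrict (\<lambda>s. fst (p s)) {1..<t}) \<in> measurable (pathLM_space n) (hist_space t)"
        unfolding hist_space_def by (rule measurable_restrict) (use c t' in auto)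
      show "(\<lambda>p. fst (p t)) \<in> borel_measurable (pathLM_space n)" by (rule c[OF t'])
    qed
    then show "{p \<in> space (pathLM_space n). x t < F t (restrict (\<lambda>s. fst (p s)) {1..<t}) (fst (p t))} \<in> sets (pathLM_space n)"
      by measurable
  qed
  have "pathLM n L M -` S \<inter> space P = space P \<inter> (\<Inter>t\<in>J0. {\<omega>\<in>space P. x t < U t \<omega>})"
  proof -
    have "pathLM n L M \<omega> \<in> S \<longleftrightarrow> (\<forall>t\<in>J0. x t < U t \<omega>)" for \<omega>
    proof -
      have eq: "F t (restrict (\<lambda>s. fst (pathLM n L M \<omega> s)) {1..<t}) (fst (pathLM n L M \<omega> t)) = U t \<omega>"
        if "t \<in> J0" for t by (rule keyLM) (use J0(2) that in blast)
      have "(\<forall>t\<in>J0. x t < F t (restrict (\<lambda>s. fst (pathLM n L M \<omega> s)) {1..<t}) (fst (pathLM n L M \<omega> t)))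
          \<longleftrightarrow> (\<forall>t\<in>J0. x t < U t \<omega>)"
        by (rule ball_cong[OF refl]) (simp only: eq)
      then show ?thesis unfolding S_def using pathLM_in[of \<omega>] by simp
    qed
    then show ?thesis by auto
  qed
  then show ?thesis unfolding gen_sets_def using S by blast
qed

definition E2 :: "nat \<times> nat \<Rightarrow> 'a set set" where
  "E2 i = (if snd i = 0 then {{\<omega>\<in>space P. x < U (fst i) \<omega>} | x. True} else gen_sets P (Gt (fst i) (snd i)) borel)"

lemma R1b: "indep_sets E2 ({1..n} \<times> {0..m+1})"
proof (rule indep_setsI)
  fix i assume i: "i \<in> {1..n} \<times> {0..m+1}"
  show "E2 i \<subseteq> events"
  proof (cases "snd i = 0")
    case True then show ?thesis using i by (auto simp: E2_def)
  next
    case False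
    then have "Gt (fst i) (snd i) \<in> borel_measurable P" using i by (intro Gt_meas) auto
    then show ?thesis using False by (auto simp: E2_def gen_sets_def)
  qed
next
  fix A J assume J: "J \<noteq> {}" "J \<subseteq> {1..n} \<times> {0..m+1}" "finite J" and A: "\<forall>j\<in>J. A j \<in> E2 j"
  define S0 where "S0 = J \<inter> {i. snd i = 0}"
  define J0 where "J0 = fst ` S0"
  define J1 where "J1 = J \<inter> {i. snd i \<noteq> 0}"
  have fS0: "finite S0" "finite J1" using J by (auto simp: S0_def J1_def)
  have fJ0: "finite J0" "J0 \<subseteq> {1..n}" using fS0 J by (auto simp: J0_def S0_def)
  have J0S0: "t \<in> J0 \<longleftrightarrow> (t, 0) \<in> J" for t by (force simp: J0_def S0_def)
  have "\<forall>t\<in>J0. \<exists>x. A (t,0) = {\<omega>\<in>space P. x < U t \<omega>}"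
  proof
    fix t assume "t \<in> J0"
    then have "A (t,0) \<in> E2 (t,0)" using A J0S0 by blast
    then show "\<exists>x. A (t,0) = {\<omega>\<in>space P. x < U t \<omega>}" by (simp add: E2_def)
  qed
  from bchoice[OF this] obtain x where x: "\<forall>t\<in>J0. A (t,0) = {\<omega>\<in>space P. x t < U t \<omega>}" by (erule exE)
  define X where "X = space P \<inter> (\<Inter>t\<in>J0. {\<omega>\<in>space P. x t < U t \<omega>})"
  have XG: "X \<in> gen_sets P (pathLM n L M) (pathLM_space n)" unfolding X_def by (rule U_gen[OF fJ0])
  have Aev: "A j \<subseteq> space P" if "j \<in> J" for j
  proof (cases "snd j = 0")
    case True
    have "A j \<in> E2 j" using A that by blast
    then have "A j \<in> {{\<omega>\<in>space P. x < U (fst j) \<omega>} | x. True}" using True by (simp add: E2_def)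
    then show ?thesis by blast
  next
    case False
    have "A j \<in> E2 j" using A that by blast
    then show ?thesis using False by (auto simp: E2_def gen_sets_def)
  qed
  have probX: "prob X = (\<Prod>t\<in>J0. prob (A (t,0)))"
  proof -
    have "prob X = (\<Prod>t\<in>J0. 1 - clp (x t))" unfolding X_def by (rule U_prod[OF order.refl fJ0(2)])
    also have "\<dots> = (\<Prod>t\<in>J0. prob (A (t,0)))" using x fJ0 U_prob by (intro prod.cong) auto
    finally show ?thesis .
  qed
  have inter: "(\<Inter>j\<in>J. A j) = X \<inter> (\<Inter>j\<in>J1. A j)"
  proof (intro set_eqI iffI)
    fix \<omega> assume w: "\<omega> \<in> (\<Inter>j\<in>J. A j)"
    then have sp: "\<omega> \<in> space P" using J(1) Aev by blast
    have "\<omega> \<in> A (t,0)" if "t \<in> J0" for t using w that J0S0 by blast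
    then have "\<omega> \<in> X" using x sp by (auto simp: X_def)
    then show "\<omega> \<in> X \<inter> (\<Inter>j\<in>J1. A j)" using w by (auto simp: J1_def)
  next
    fix \<omega> assume w: "\<omega> \<in> X \<inter> (\<Inter>j\<in>J1. A j)"
    show "\<omega> \<in> (\<Inter>j\<in>J. A j)"
    proof
      fix j assume j: "j \<in> J"
      show "\<omega> \<in> A j"
      proof (cases "snd j = 0")
        case True
        then have "fst j \<in> J0" "j = (fst j, 0)" using j J0S0 by (metis prod.collapse)+
        then show ?thesis using w x by (auto simp: X_def)
      next
        case False then show ?thesis using w j by (auto simp: J1_def)
      qed
    qed
  qed
  define K where "K = insert S2_LM ((\<lambda>i. S2_G (fst i) (snd i)) ` J1)"
  define Y where "Y k = (case k of S2_LM \<Rightarrow> X | S2_G t j \<Rightarrow> A (t,j) | S2_C _ _ \<Rightarrow> {})" for k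
  have injG: "inj_on (\<lambda>i. S2_G (fst i) (snd i)) J1" by (auto simp: inj_on_def prod_eq_iff)
  have notin: "S2_LM \<notin> (\<lambda>i. S2_G (fst i) (snd i)) ` J1" by auto
  have J1sub: "J1 \<subseteq> {1..n} \<times> {1..m+1}" using J(2) by (auto simp: J1_def)
  have "prob (\<Inter>k\<in>K. Y k) = (\<Prod>k\<in>K. prob (Y k))"
  proof (rule indep_setsD[OF indep2])
    show "K \<subseteq> {S2_LM} \<union> {S2_G t j |t j. t \<in> {1..n} \<and> j \<in> {1..m + 1}} \<union> {S2_C t j |t j. t \<in> {1..n} \<and> j \<in> {1..m + 1}}"
      using J1sub by (auto simp: K_def)
    show "K \<noteq> {}" "finite K" using fS0 by (auto simp: K_def)
    show "\<forall>j\<in>K. Y j \<in> (case j of S2_LM \<Rightarrow> gen_sets P (pathLM n L M) (pathLM_space n)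
            | S2_G t j \<Rightarrow> gen_sets P (Gt t j) borel | S2_C t j \<Rightarrow> gen_sets P (Ct t j) (count_space UNIV))"
    proof
      fix k assume "k \<in> K"
      then consider "k = S2_LM" | i where "i \<in> J1" "k = S2_G (fst i) (snd i)" by (auto simp: K_def)
      then show "Y k \<in> (case k of S2_LM \<Rightarrow> gen_sets P (pathLM n L M) (pathLM_space n)
            | S2_G t j \<Rightarrow> gen_sets P (Gt t j) borel | S2_C t j \<Rightarrow> gen_sets P (Ct t j) (count_space UNIV))"
      proof cases
        case 1 then show ?thesis using XG by (simp add: Y_def)
      next
        case (2 i)
        then have "A i \<in> E2 i" "snd i \<noteq> 0" using A by (auto simp: J1_def)
        then show ?thesis using 2 by (simp add: Y_def E2_def)
      qed
    qed
  qed
  moreover have "(\<Inter>k\<in>K. Y k) = X \<inter> (\<Inter>j\<in>J1. A j)" by (auto simp: K_def Y_def)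
  moreover have "(\<Prod>k\<in>K. prob (Y k)) = prob X * (\<Prod>j\<in>J1. prob (A j))"
    unfolding K_def using fS0 notin injG by (simp add: prod.reindex Y_def)
  ultimately have "prob (\<Inter>j\<in>J. A j) = prob X * (\<Prod>j\<in>J1. prob (A j))" using inter by simp
  also have "prob X = (\<Prod>j\<in>S0. prob (A j))"
  proof -
    have "inj_on fst S0" by (auto simp: inj_on_def S0_def prod_eq_iff)
    then have "(\<Prod>t\<in>J0. prob (A (t,0))) = (\<Prod>j\<in>S0. prob (A (fst j, 0)))"
      unfolding J0_def by (simp add: prod.reindex)
    also have "\<dots> = (\<Prod>j\<in>S0. prob (A j))" by (intro prod.cong) (auto simp: S0_def)
    finally show ?thesis using probX by simp
  qed
  also have "(\<Prod>j\<in>S0. prob (A j)) * (\<Prod>j\<in>J1. prob (A j)) = (\<Prod>j\<in>J. prob (A j))"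
  proof -
    have "J = S0 \<union> J1" "S0 \<inter> J1 = {}" by (auto simp: S0_def J1_def)
    then show ?thesis using fS0 by (simp add: prod.union_disjoint[symmetric])
  qed
  finally show "prob (\<Inter>j\<in>J. A j) = (\<Prod>j\<in>J. prob (A j))" .
qed


definition GG where "GG = mixG Gr Gl Gc C"

lemma Gr_m[measurable]: "Gr \<in> borel_measurable P" by (rule Gr_meas)
lemma Gl_m[measurable]: "Gl \<in> borel_measurable P" by (rule Gl_meas)
lemma Gc_m[measurable]: "Gc \<in> borel_measurable P" by (rule Gc_meas)
lemma C_m[measurable]: "C \<in> measurable P (count_space UNIV)" by (rule C_meas)

lemma GG_meas[measurable]: "GG \<in> borel_measurable P"
proof -
  have "GG = (\<lambda>\<omega>. if C \<omega> = CompR then Gr \<omega> else if C \<omega> = CompL then Gl \<omega> else Gc \<omega>)"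
    by (auto simp: GG_def mixG_def fun_eq_iff split: comp.split)
  also have "\<dots> \<in> borel_measurable P" by measurable
  finally show ?thesis .
qed

lemma indep1_pair:
  assumes "i \<noteq> j" "X \<in> (case i of S1_LM \<Rightarrow> gen_sets P (pathLM n L M) (pathLM_space n)
            | S1_Gr \<Rightarrow> gen_sets P Gr borel | S1_Gl \<Rightarrow> gen_sets P Gl borel
            | S1_Gc \<Rightarrow> gen_sets P Gc borel | S1_C \<Rightarrow> gen_sets P C (count_space UNIV))"
    "Y \<in> (case j of S1_LM \<Rightarrow> gen_sets P (pathLM n L M) (pathLM_space n)
            | S1_Gr \<Rightarrow> gen_sets P Gr borel | S1_Gl \<Rightarrow> gen_sets P Gl borel
            | S1_Gc \<Rightarrow> gen_sets P Gc borel | S1_C \<Rightarrow> gen_sets P C (count_space UNIV))"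
  shows "prob (X \<inter> Y) = prob X * prob Y"
proof -
  have "prob (\<Inter>k\<in>{i,j}. (\<lambda>k. if k = i then X else Y) k) = (\<Prod>k\<in>{i,j}. prob ((\<lambda>k. if k = i then X else Y) k))"
    by (rule indep_setsD[OF indep1]) (use assms in auto)
  then show ?thesis using assms(1) by (simp add: Int_commute)
qed

lemma mix_formula:
  assumes A[measurable]: "A \<in> sets borel"
  shows "prob {\<omega>\<in>space P. GG \<omega> \<in> A} =
    cr * prob {\<omega>\<in>space P. Gr \<omega> \<in> A} + cl * prob {\<omega>\<in>space P. Gl \<omega> \<in> A} + cc * prob {\<omega>\<in>space P. Gc \<omega> \<in> A}"
proof -
  define CR where "CR = {\<omega>\<in>space P. C \<omega> = CompR}"
  define CL where "CL = {\<omega>\<in>space P. C \<omega> = CompL}"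
  define CC where "CC = {\<omega>\<in>space P. C \<omega> = CompC}"
  have CRg: "CR \<in> gen_sets P C (count_space UNIV)" unfolding gen_sets_def CR_def
    by (intro CollectI exI[of _ "{CompR}"]) auto
  have CLg: "CL \<in> gen_sets P C (count_space UNIV)" unfolding gen_sets_def CL_def
    by (intro CollectI exI[of _ "{CompL}"]) auto
  have CCg: "CC \<in> gen_sets P C (count_space UNIV)" unfolding gen_sets_def CC_def
    by (intro CollectI exI[of _ "{CompC}"]) auto
  have g: "{\<omega>\<in>space P. X \<omega> \<in> A} \<in> gen_sets P X borel" for X
    unfolding gen_sets_def by (intro CollectI exI[of _ A]) auto
  have "{\<omega>\<in>space P. GG \<omega> \<in> A} = (CR \<inter> {\<omega>\<in>space P. Gr \<omega> \<in> A}) \<union> (CL \<inter> {\<omega>\<in>space P. Gl \<omega> \<in> A}) \<union> (CC \<inter> {\<omega>\<in>space P. Gc \<omega> \<in> A})"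
  proof (intro set_eqI)
    fix \<omega> show "\<omega> \<in> {\<omega>\<in>space P. GG \<omega> \<in> A} \<longleftrightarrow> \<omega> \<in> (CR \<inter> {\<omega>\<in>space P. Gr \<omega> \<in> A}) \<union> (CL \<inter> {\<omega>\<in>space P. Gl \<omega> \<in> A}) \<union> (CC \<inter> {\<omega>\<in>space P. Gc \<omega> \<in> A})"
      by (cases "C \<omega>") (auto simp: GG_def mixG_def CR_def CL_def CC_def)
  qed
  also have "prob \<dots> = prob (CR \<inter> {\<omega>\<in>space P. Gr \<omega> \<in> A}) + prob (CL \<inter> {\<omega>\<in>space P. Gl \<omega> \<in> A}) + prob (CC \<inter> {\<omega>\<in>space P. Gc \<omega> \<in> A})"
    by (subst finite_measure_Union; (subst finite_measure_Union)?) (auto simp: CR_def CL_def CC_def)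
  also have "prob (CR \<inter> {\<omega>\<in>space P. Gr \<omega> \<in> A}) = cr * prob {\<omega>\<in>space P. Gr \<omega> \<in> A}"
  proof -
    have "prob (CR \<inter> {\<omega>\<in>space P. Gr \<omega> \<in> A}) = prob CR * prob {\<omega>\<in>space P. Gr \<omega> \<in> A}"
      by (rule indep1_pair[of S1_C S1_Gr]) (use CRg g in auto)
    then show ?thesis using C_law(1) by (simp add: CR_def)
  qed
  also have "prob (CL \<inter> {\<omega>\<in>space P. Gl \<omega> \<in> A}) = cl * prob {\<omega>\<in>space P. Gl \<omega> \<in> A}"
  proof -
    have "prob (CL \<inter> {\<omega>\<in>space P. Gl \<omega> \<in> A}) = prob CL * prob {\<omega>\<in>space P. Gl \<omega> \<in> A}"
      by (rule indep1_pair[of S1_C S1_Gl]) (use CLg g in auto)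
    then show ?thesis using C_law(2) by (simp add: CL_def)
  qed
  also have "prob (CC \<inter> {\<omega>\<in>space P. Gc \<omega> \<in> A}) = cc * prob {\<omega>\<in>space P. Gc \<omega> \<in> A}"
  proof -
    have "prob (CC \<inter> {\<omega>\<in>space P. Gc \<omega> \<in> A}) = prob CC * prob {\<omega>\<in>space P. Gc \<omega> \<in> A}"
      by (rule indep1_pair[of S1_C S1_Gc]) (use CCg g in auto)
    then show ?thesis using C_law(3) by (simp add: CC_def)
  qed
  finally show ?thesis .
qed

lemma dec: "distortion g" "cr \<ge> 0" "cl \<ge> 0" "cc \<ge> 0" "distortion gr" "distortion gl" "distortion gc"
  "\<And>u. u \<in> {0..1} \<Longrightarrow> g u = cr * gr u + cl * gl u + cc * gc u"
  using decomp unfolding distortion_decomp_def rc_step_distortion_def lc_step_distortion_def by auto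

lemma dist_mono: "distortion h \<Longrightarrow> u \<in> {0..1} \<Longrightarrow> w \<in> {0..1} \<Longrightarrow> u \<le> w \<Longrightarrow> h u \<le> h w"
  unfolding distortion_def by (auto simp: mono_on_def)

lemma dist_range: "distortion h \<Longrightarrow> u \<in> {0..1} \<Longrightarrow> 0 \<le> h u \<and> h u \<le> 1"
  unfolding distortion_def by (auto simp: image_subset_iff)

lemma ev_set: assumes "f \<in> borel_measurable P" "A \<in> sets borel" shows "{\<omega>\<in>space P. f \<omega> \<in> A} \<in> events"
proof -
  have "{\<omega>\<in>space P. f \<omega> \<in> A} = f -` A \<inter> space P" by auto
  then show ?thesis using measurable_sets[OF assms] by simp
qed
lemma ev_le[simp]: "f \<in> borel_measurable P \<Longrightarrow> {\<omega>\<in>space P. f \<omega> \<le> (x::real)} \<in> events"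
  using ev_set[of f "{..x}", OF _ atMost_borel] by simp
lemma ev_lt[simp]: "f \<in> borel_measurable P \<Longrightarrow> {\<omega>\<in>space P. f \<omega> < (x::real)} \<in> events"
  using ev_set[of f "{..<x}", OF _ lessThan_borel] by simp
lemma ev_eq[simp]: "f \<in> borel_measurable P \<Longrightarrow> {\<omega>\<in>space P. f \<omega> = (x::real)} \<in> events"
  using ev_set[of f "{x}"] by simp

lemma pmono: "(\<And>\<omega>. \<omega> \<in> space P \<Longrightarrow> Q \<omega> \<Longrightarrow> R \<omega>) \<Longrightarrow> {\<omega>\<in>space P. R \<omega>} \<in> events \<Longrightarrow>
   prob {\<omega>\<in>space P. Q \<omega>} \<le> prob {\<omega>\<in>space P. R \<omega>}"
  by (rule finite_measure_mono) auto

lemma Q_bounds: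
  assumes b: "b \<in> {0..1}"
  shows "prob {\<omega>\<in>space P. GG \<omega> < b} \<le> g b"
    and "v \<in> {0..1} \<Longrightarrow> v < b \<Longrightarrow> g v \<le> prob {\<omega>\<in>space P. GG \<omega> < b}"
proof -
  have f: "prob {\<omega>\<in>space P. GG \<omega> < b} =
    cr * prob {\<omega>\<in>space P. Gr \<omega> < b} + cl * prob {\<omega>\<in>space P. Gl \<omega> < b} + cc * prob {\<omega>\<in>space P. Gc \<omega> < b}"
    using mix_formula[of "{..<b}"] by simp
  have r1: "prob {\<omega>\<in>space P. Gr \<omega> < b} \<le> gr b"
    using pmono[of "\<lambda>\<omega>. Gr \<omega> < b" "\<lambda>\<omega>. Gr \<omega> \<le> b"] Gr_law[OF b] Gr_m Gl_m Gc_m by auto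
  have c1: "prob {\<omega>\<in>space P. Gc \<omega> < b} \<le> gc b"
    using pmono[of "\<lambda>\<omega>. Gc \<omega> < b" "\<lambda>\<omega>. Gc \<omega> \<le> b"] Gc_law[OF b] Gr_m Gl_m Gc_m by auto
  show "prob {\<omega>\<in>space P. GG \<omega> < b} \<le> g b"
    unfolding f dec(8)[OF b] using r1 c1 Gl_law[OF b] dec(2-4)
    by (intro add_mono mult_left_mono) auto
  assume v: "v \<in> {0..1}" "v < b"
  have r2: "gr v \<le> prob {\<omega>\<in>space P. Gr \<omega> < b}"
    using pmono[of "\<lambda>\<omega>. Gr \<omega> \<le> v" "\<lambda>\<omega>. Gr \<omega> < b"] Gr_law[OF v(1)] v Gr_m Gl_m Gc_m by auto
  have c2: "gc v \<le> prob {\<omega>\<in>space P. Gc \<omega> < b}"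
    using pmono[of "\<lambda>\<omega>. Gc \<omega> \<le> v" "\<lambda>\<omega>. Gc \<omega> < b"] Gc_law[OF v(1)] v Gr_m Gl_m Gc_m by auto
  have l2: "gl v \<le> gl b" using dist_mono[OF dec(6) v(1) b] v by simp
  show "g v \<le> prob {\<omega>\<in>space P. GG \<omega> < b}"
    unfolding f dec(8)[OF v(1)] using r2 c2 l2 Gl_law[OF b] dec(2-4)
    by (intro add_mono mult_left_mono) auto
qed

lemma alpha_le: "j \<le> k \<Longrightarrow> k \<le> m + 1 \<Longrightarrow> \<alpha> j \<le> \<alpha> k"
proof (induction k)
  case 0 then show ?case by simp
next
  case (Suc k)
  show ?case
  proof (cases "j = Suc k")
    case True then show ?thesis by simp
  next
    case False
    then have "\<alpha> j \<le> \<alpha> k" using Suc by simp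
    also have "\<alpha> k < \<alpha> (Suc k)" using alpha_mono Suc.prems by simp
    finally show ?thesis by simp
  qed
qed

lemma alpha_range: "j \<le> m + 1 \<Longrightarrow> \<alpha> j \<in> {0..1}"
  using alpha_le[of 0 j] alpha_le[of j "m+1"] alpha0 alpha1 by auto

lemma Q_alpha: assumes j: "j \<le> m + 1" shows "prob {\<omega>\<in>space P. GG \<omega> < \<alpha> j} = g (\<alpha> j)"
proof (cases "j = 0")
  case True
  have "prob {\<omega>\<in>space P. GG \<omega> < \<alpha> j} \<le> 0"
    using Q_bounds(1)[of 0] dec(1) True alpha0 by (simp add: distortion_def)
  then show ?thesis using True alpha0 dec(1) by (simp add: distortion_def antisym)
next
  case False
  let ?b = "\<alpha> j"
  have b: "?b \<in> {0..1}" by (rule alpha_range[OF j])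
  have bpos: "0 < ?b" using alpha_le[of 1 j] alpha_mono[of 0] alpha0 j False by force
  have ge: "g ?b - e < prob {\<omega>\<in>space P. GG \<omega> < ?b}" if e: "e > 0" for e
  proof -
    obtain d where d: "d > 0" "\<forall>x'\<in>{0..1}. dist x' ?b < d \<longrightarrow> dist (g x') (g ?b) < e"
      using g_cont[OF j] e unfolding continuous_within_eps_delta by blast
    define v where "v = max 0 (?b - d/2)"
    have v: "v \<in> {0..1}" "v < ?b" "dist v ?b < d" using b bpos d by (auto simp: v_def dist_real_def)
    have "\<bar>g v - g ?b\<bar> < e" using d(2) v by (simp add: dist_real_def)
    then have "g ?b - e < g v" by linarith
    also have "\<dots> \<le> prob {\<omega>\<in>space P. GG \<omega> < ?b}" by (rule Q_bounds(2)[OF b v(1,2)])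
    finally show ?thesis .
  qed
  have "g ?b \<le> prob {\<omega>\<in>space P. GG \<omega> < ?b}"
  proof (rule ccontr)
    assume "\<not> ?thesis"
    then show False using ge[of "g ?b - prob {\<omega>\<in>space P. GG \<omega> < ?b}"] by linarith
  qed
  then show ?thesis using Q_bounds(1)[OF b] by simp
qed

lemma G_interval:
  assumes j: "j \<in> {1..m+1}"
  shows "prob {\<omega>\<in>space P. GG \<omega> \<in> {\<alpha> (j - 1)..<\<alpha> j}} = g (\<alpha> j) - g (\<alpha> (j - 1))"
proof -
  have le: "\<alpha> (j - 1) \<le> \<alpha> j" using alpha_le[of "j - 1" j] j by simp
  have j1: "j - 1 \<le> m + 1" using j by auto
  have "{\<omega>\<in>space P. GG \<omega> \<in> {\<alpha> (j - 1)..<\<alpha> j}} = {\<omega>\<in>space P. GG \<omega> < \<alpha> j} - {\<omega>\<in>space P. GG \<omega> < \<alpha> (j - 1)}"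
    by auto
  also have "prob \<dots> = prob {\<omega>\<in>space P. GG \<omega> < \<alpha> j} - prob {\<omega>\<in>space P. GG \<omega> < \<alpha> (j - 1)}"
    using le by (intro finite_measure_Diff) auto
  also have "\<dots> = g (\<alpha> j) - g (\<alpha> (j - 1))" using j Q_alpha[of j] Q_alpha[OF j1] by simp
  finally show ?thesis .
qed

lemma G_zero: "prob {\<omega>\<in>space P. GG \<omega> = 0} = 0"
proof -
  have f: "prob {\<omega>\<in>space P. GG \<omega> = 0} =
    cr * prob {\<omega>\<in>space P. Gr \<omega> = 0} + cl * prob {\<omega>\<in>space P. Gl \<omega> = 0} + cc * prob {\<omega>\<in>space P. Gc \<omega> = 0}"
    using mix_formula[of "{0}"] by simp
  have bnd: "prob {\<omega>\<in>space P. GG \<omega> = 0} \<le> g v" if v: "v \<in> {0<..1}" for v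
  proof -
    have v1: "v \<in> {0..1}" using v by auto
    have r: "prob {\<omega>\<in>space P. Gr \<omega> = 0} \<le> gr v"
      using pmono[of "\<lambda>\<omega>. Gr \<omega> = 0" "\<lambda>\<omega>. Gr \<omega> \<le> v"] Gr_law[OF v1] v Gr_m Gl_m Gc_m by auto
    have l: "prob {\<omega>\<in>space P. Gl \<omega> = 0} \<le> gl v"
      using pmono[of "\<lambda>\<omega>. Gl \<omega> = 0" "\<lambda>\<omega>. Gl \<omega> < v"] Gl_law[OF v1] v Gr_m Gl_m Gc_m by auto
    have c: "prob {\<omega>\<in>space P. Gc \<omega> = 0} \<le> gc v"
      using pmono[of "\<lambda>\<omega>. Gc \<omega> = 0" "\<lambda>\<omega>. Gc \<omega> \<le> v"] Gc_law[OF v1] v Gr_m Gl_m Gc_m by auto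
    show ?thesis unfolding f dec(8)[OF v1] using r l c dec(2-4)
      by (intro add_mono mult_left_mono) auto
  qed
  have "prob {\<omega>\<in>space P. GG \<omega> = 0} \<le> e" if e: "e > 0" for e
  proof -
    obtain d where d: "d > 0" "\<forall>x'\<in>{0..1}. dist x' (\<alpha> 0) < d \<longrightarrow> dist (g x') (g (\<alpha> 0)) < e"
      using g_cont[of 0] e unfolding continuous_within_eps_delta by auto
    define v where "v = min 1 (d/2)"
    have v: "v \<in> {0<..1}" "v \<in> {0..1}" "dist v 0 < d" using d by (auto simp: v_def dist_real_def)
    have "g v < e" using d(2) v alpha0 dec(1) by (auto simp: dist_real_def distortion_def)
    with bnd[OF v(1)] show ?thesis by simp
  qed
  then have "prob {\<omega>\<in>space P. GG \<omega> = 0} \<le> 0"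
    by (metis field_le_epsilon add_0)
  then show ?thesis using measure_nonneg[of P] by (simp add: antisym)
qed


definition Ij where "Ij j = {\<alpha> (j - 1)..<\<alpha> j}"
definition cj where "cj j = prob {\<omega>\<in>space P. GG \<omega> \<in> Ij j}"

lemma cj_eq: "j \<in> {1..m+1} \<Longrightarrow> cj j = g (\<alpha> j) - g (\<alpha> (j - 1))"
  unfolding cj_def Ij_def by (rule G_interval)

lemma cj_pos: "j \<in> {1..m+1} \<Longrightarrow> 0 < cj j"
  using cj_eq[of j] g_incr[of j] measure_nonneg[of P "{\<omega>\<in>space P. GG \<omega> \<in> Ij j}"]
  unfolding cj_def by (metis less_eq_real_def)

lemma Ij_sub: assumes j: "j \<in> {1..m+1}" shows "Ij j \<subseteq> {0..<1}"
proof -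
  have j': "j - 1 \<le> m + 1" "j \<le> m + 1" using j by auto
  show ?thesis using alpha_range[OF j'(1)] alpha_range[OF j'(2)] by (auto simp: Ij_def)
qed

lemma Ij_borel[measurable]: "Ij j \<in> sets borel" by (simp add: Ij_def)

lemma Gt_law': assumes t: "t \<in> {1..n}" and j: "j \<in> {1..m+1}" and A: "A \<in> sets borel"
  shows "prob {\<omega>\<in>space P. Gt t j \<omega> \<in> A} = prob {\<omega>\<in>space P. GG \<omega> \<in> A \<inter> Ij j} / cj j"
proof -
  have "{\<omega>\<in>space P. Gt t j \<omega> \<in> A} = Gt t j -` A \<inter> space P" by auto
  then show ?thesis using Gt_law[OF t j A] by (simp add: GG_def cj_def Ij_def)
qed

lemma AE_prob0: assumes "{\<omega>\<in>space P. Q \<omega>} \<in> events" "prob {\<omega>\<in>space P. Q \<omega>} = 0"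
  shows "AE \<omega> in P. \<not> Q \<omega>"
proof -
  have "{\<omega>\<in>space P. Q \<omega>} \<in> null_sets P" using assms by (simp add: null_sets_def emeasure_eq_measure)
  from AE_not_in[OF this] AE_space show ?thesis by eventually_elim auto
qed

lemma Gt_in: assumes t: "t \<in> {1..n}" and j: "j \<in> {1..m+1}"
  shows "AE \<omega> in P. Gt t j \<omega> \<in> Ij j"
proof -
  have "AE \<omega> in P. \<not> (Gt t j \<omega> \<notin> Ij j)"
  proof (rule AE_prob0)
  have Gm: "Gt t j \<in> borel_measurable P" using t j by simp
  have "{\<omega>\<in>space P. Gt t j \<omega> \<notin> Ij j} = {\<omega>\<in>space P. Gt t j \<omega> \<in> - Ij j}" by auto
  also have "prob \<dots> = prob {\<omega>\<in>space P. GG \<omega> \<in> - Ij j \<inter> Ij j} / cj j"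
    by (rule Gt_law'[OF t j]) simp
  also have "\<dots> = 0" by simp
  finally show "prob {\<omega>\<in>space P. Gt t j \<omega> \<notin> Ij j} = 0" .
  show "{\<omega>\<in>space P. Gt t j \<omega> \<notin> Ij j} \<in> events" using ev_set[OF Gm, of "- Ij j"] by simp
  qed
  then show ?thesis by simp
qed

lemma Gt_nz: assumes t: "t \<in> {1..n}" and j: "j \<in> {1..m+1}"
  shows "AE \<omega> in P. Gt t j \<omega> \<noteq> 0"
proof -
  have Gm: "Gt t j \<in> borel_measurable P" using t j by simp
  have "prob {\<omega>\<in>space P. Gt t j \<omega> = 0} = prob {\<omega>\<in>space P. Gt t j \<omega> \<in> {0}}" by simp
  also have "\<dots> = prob {\<omega>\<in>space P. GG \<omega> \<in> {0} \<inter> Ij j} / cj j" by (rule Gt_law'[OF t j]) simp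
  also have "prob {\<omega>\<in>space P. GG \<omega> \<in> {0} \<inter> Ij j} \<le> prob {\<omega>\<in>space P. GG \<omega> = 0}"
    by (rule pmono) (auto simp: GG_meas)
  finally have "prob {\<omega>\<in>space P. Gt t j \<omega> = 0} \<le> 0"
    using G_zero cj_pos[OF j] by (simp add: divide_right_mono)
  then have "prob {\<omega>\<in>space P. Gt t j \<omega> = 0} = 0" using measure_nonneg[of P] by (simp add: antisym)
  then show ?thesis by (intro AE_prob0) (auto simp: Gm)
qed

lemma Gt_01: assumes t: "t \<in> {1..n}" and j: "j \<in> {1..m+1}"
  shows "AE \<omega> in P. 0 < Gt t j \<omega> \<and> Gt t j \<omega> < 1"
  using Gt_in[OF t j] Gt_nz[OF t j] by eventually_elim (use Ij_sub[OF j] in auto)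


lemma Gt_exp: assumes t: "t \<in> {1..n}" and j: "j \<in> {1..m+1}"
  shows "(\<integral>\<omega>. Gt t j \<omega> \<partial>P) = (\<integral>\<omega>. GG \<omega> * indicator (Ij j) (GG \<omega>) \<partial>P) / cj j"
proof -
  have Gm[measurable]: "Gt t j \<in> borel_measurable P" using t j by simp
  have c: "0 < cj j" by (rule cj_pos[OF j])
  define dn where "dn x = indicator (Ij j) x / cj j" for x :: real
  have dn[measurable]: "dn \<in> borel_measurable borel" unfolding dn_def by measurable
  have deq: "distr P borel (Gt t j) = density (distr P borel GG) (\<lambda>x. ennreal (dn x))"
  proof (rule measure_eqI)
    show "sets (distr P borel (Gt t j)) = sets (density (distr P borel GG) (\<lambda>x. ennreal (dn x)))" by simp
    fix A assume "A \<in> sets (distr P borel (Gt t j))"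
    then have A[measurable]: "A \<in> sets borel" by simp
    have "emeasure (distr P borel (Gt t j)) A = emeasure P (Gt t j -` A \<inter> space P)"
      by (rule emeasure_distr) auto
    also have "\<dots> = ennreal (prob {\<omega>\<in>space P. Gt t j \<omega> \<in> A})"
      by (simp add: emeasure_eq_measure vimage_def Int_def conj_commute)
    also have "\<dots> = ennreal (prob {\<omega>\<in>space P. GG \<omega> \<in> A \<inter> Ij j} / cj j)" by (simp add: Gt_law'[OF t j A])
    finally have l: "emeasure (distr P borel (Gt t j)) A = ennreal (prob {\<omega>\<in>space P. GG \<omega> \<in> A \<inter> Ij j} / cj j)" .
    have "emeasure (density (distr P borel GG) (\<lambda>x. ennreal (dn x))) A
        = (\<integral>\<^sup>+ x. ennreal (dn x) * indicator A x \<partial>distr P borel GG)"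
      by (rule emeasure_density) auto
    also have "\<dots> = (\<integral>\<^sup>+ x. ennreal (1 / cj j) * indicator (A \<inter> Ij j) x \<partial>distr P borel GG)"
      by (intro nn_integral_cong) (auto simp: dn_def indicator_def)
    also have "\<dots> = ennreal (1 / cj j) * emeasure (distr P borel GG) (A \<inter> Ij j)"
      by (rule nn_integral_cmult_indicator) simp
    also have "emeasure (distr P borel GG) (A \<inter> Ij j) = emeasure P (GG -` (A \<inter> Ij j) \<inter> space P)"
      by (rule emeasure_distr) auto
    also have "\<dots> = ennreal (prob {\<omega>\<in>space P. GG \<omega> \<in> A \<inter> Ij j})"
      by (simp add: emeasure_eq_measure vimage_def Int_def conj_commute)
    also have "ennreal (1 / cj j) * \<dots> = ennreal (prob {\<omega>\<in>space P. GG \<omega> \<in> A \<inter> Ij j} / cj j)"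
      using c by (simp add: ennreal_mult[symmetric])
    finally show "emeasure (distr P borel (Gt t j)) A = emeasure (density (distr P borel GG) (\<lambda>x. ennreal (dn x))) A"
      using l by simp
  qed
  have "(\<integral>\<omega>. Gt t j \<omega> \<partial>P) = (\<integral>x. x \<partial>distr P borel (Gt t j))"
    by (rule integral_distr[symmetric]) auto
  also have "\<dots> = (\<integral>x. x \<partial>density (distr P borel GG) (\<lambda>x. ennreal (dn x)))" by (simp add: deq)
  also have "\<dots> = (\<integral>x. dn x *\<^sub>R x \<partial>distr P borel GG)"
    by (rule integral_density) (use c in \<open>auto simp: dn_def\<close>)
  also have "\<dots> = (\<integral>\<omega>. dn (GG \<omega>) * GG \<omega> \<partial>P)"
    by (subst integral_distr) auto
  also have "\<dots> = (\<integral>\<omega>. (GG \<omega> * indicator (Ij j) (GG \<omega>)) / cj j \<partial>P)"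
    by (intro Bochner_Integration.integral_cong) (auto simp: dn_def)
  also have "\<dots> = (\<integral>\<omega>. GG \<omega> * indicator (Ij j) (GG \<omega>) \<partial>P) / cj j"
    by (rule integral_divide_zero)
  finally show ?thesis .
qed

lemma E2_Int_stable: "Int_stable (E2 i)"
proof (cases "snd i = 0")
  case True
  show ?thesis unfolding Int_stable_def E2_def using True
  proof (clarsimp)
    fix x y
    show "\<exists>z. {\<omega>\<in>space P. x < U (fst i) \<omega>} \<inter> {\<omega>\<in>space P. y < U (fst i) \<omega>} = {\<omega>\<in>space P. z < U (fst i) \<omega>}"
      by (rule exI[of _ "max x y"]) auto
  qed
next
  case False
  show ?thesis unfolding Int_stable_def E2_def gen_sets_def using False
  proof (clarsimp)
    fix A B :: "real set" assume "A \<in> sets borel" "B \<in> sets borel"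
    then show "\<exists>C. Gt (fst i) (snd i) -` A \<inter> space P \<inter> (Gt (fst i) (snd i) -` B \<inter> space P) = Gt (fst i) (snd i) -` C \<inter> space P \<and> C \<in> sets borel"
      by (intro exI[of _ "A \<inter> B"]) auto
  qed
qed

lemma E2_sub: "i \<in> {1..n} \<times> {0..m+1} \<Longrightarrow> E2 i \<subseteq> Pow (space P)"
  by (auto simp: E2_def gen_sets_def)

lemma R1c: "indep_sets (\<lambda>i. sigma_sets (space P) (E2 i)) ({1..n} \<times> {0..m+1})"
  by (rule indep_sets_sigma[OF R1b E2_Int_stable])

lemma U_sig_meas: assumes t: "t \<in> {1..n}" and S: "E2 (t,0) \<subseteq> S" "S \<subseteq> Pow (space P)"
  shows "U t \<in> borel_measurable (sigma (space P) S)"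
proof (rule borel_measurableI_greater)
  fix y
  have "{\<omega>\<in>space P. y < U t \<omega>} \<in> E2 (t,0)" by (auto simp: E2_def)
  then show "{\<omega>\<in>space (sigma (space P) S). y < U t \<omega>} \<in> sets (sigma (space P) S)"
    using S by (auto simp: sets_measure_of space_measure_of_conv)
qed

lemma Gt_sig_meas: assumes t: "t \<in> {1..n}" and j: "j \<in> {1..m+1}" and S: "E2 (t,j) \<subseteq> S" "S \<subseteq> Pow (space P)"
  shows "Gt t j \<in> borel_measurable (sigma (space P) S)"
proof (rule measurableI)
  fix x assume "x \<in> space (sigma (space P) S)"
  then show "Gt t j x \<in> space borel" by simp
next
  fix A :: "real set" assume "A \<in> sets borel"
  then have "Gt t j -` A \<inter> space P \<in> E2 (t,j)" using j by (auto simp: E2_def gen_sets_def)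
  then show "Gt t j -` A \<inter> space (sigma (space P) S) \<in> sets (sigma (space P) S)"
    using S by (auto simp: sets_measure_of space_measure_of_conv)
qed

lemma UG_indep: assumes t: "t \<in> {1..n}" and j: "j \<in> {1..m+1}" and A: "A \<in> sets borel" and B: "B \<in> sets borel"
  shows "prob (Gt t j -` A \<inter> space P \<inter> (U t -` B \<inter> space P)) = prob (Gt t j -` A \<inter> space P) * prob (U t -` B \<inter> space P)"
proof -
  have ne: "(t,j) \<noteq> (t,0)" using j by auto
  have m1: "Gt t j -` A \<inter> space P \<in> sigma_sets (space P) (E2 (t,j))"
    using j A by (intro sigma_sets.Basic) (auto simp: E2_def gen_sets_def)
  have "U t \<in> borel_measurable (sigma (space P) (E2 (t,0)))"
    by (rule U_sig_meas[OF t]) (auto simp: E2_def)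
  then have m2: "U t -` B \<inter> space P \<in> sigma_sets (space P) (E2 (t,0))"
  proof -
    have sub: "E2 (t,0) \<subseteq> Pow (space P)" using E2_sub t by auto
    show ?thesis using measurable_sets[OF \<open>U t \<in> borel_measurable (sigma (space P) (E2 (t,0)))\<close> B] sub
      by (simp add: sets_measure_of space_measure_of_conv)
  qed
  have "prob (\<Inter>i\<in>{(t,j),(t,0)}. (\<lambda>i. if i = (t,j) then Gt t j -` A \<inter> space P else U t -` B \<inter> space P) i)
     = (\<Prod>i\<in>{(t,j),(t,0)}. prob ((\<lambda>i. if i = (t,j) then Gt t j -` A \<inter> space P else U t -` B \<inter> space P) i))"
    by (rule indep_setsD[OF R1c]) (use t j m1 m2 ne in auto)
  then show ?thesis using ne by simp
qed


lemma clp_range: "0 \<le> clp x" "clp x \<le> 1" by (auto simp: clp_def)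

lemma clp_meas[measurable]: "clp \<in> borel_measurable borel" unfolding clp_def[abs_def] by measurable

lemma UG: assumes t: "t \<in> {1..n}" and j: "j \<in> {1..m+1}"
  shows "prob {\<omega>\<in>space P. c' - Gt t j \<omega> < U t \<omega>} = (\<integral>\<omega>. 1 - clp (c' - Gt t j \<omega>) \<partial>P)"
proof -
  have Gm[measurable]: "Gt t j \<in> borel_measurable P" using t j by simp
  have Um[measurable]: "U t \<in> borel_measurable P" using t by simp
  let ?DG = "distr P borel (Gt t j)" and ?DU = "distr P borel (U t)"
  let ?J = "distr P (borel \<Otimes>\<^sub>M borel) (\<lambda>\<omega>. (Gt t j \<omega>, U t \<omega>))"
  interpret DG: prob_space ?DG by (rule prob_space_distr) simp
  interpret DU: prob_space ?DU by (rule prob_space_distr) simp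
  have pe: "?DG \<Otimes>\<^sub>M ?DU = ?J"
  proof (rule pair_measure_eqI)
    show "sigma_finite_measure ?DG" ..
    show "sigma_finite_measure ?DU" ..
    show "sets (?DG \<Otimes>\<^sub>M ?DU) = sets ?J" by simp
    fix A B assume A: "A \<in> sets ?DG" and B: "B \<in> sets ?DU"
    then have A': "A \<in> sets borel" and B': "B \<in> sets borel" by auto
    have "emeasure ?J (A \<times> B) = emeasure P ((\<lambda>\<omega>. (Gt t j \<omega>, U t \<omega>)) -` (A \<times> B) \<inter> space P)"
      using A' B' by (intro emeasure_distr) auto
    also have "(\<lambda>\<omega>. (Gt t j \<omega>, U t \<omega>)) -` (A \<times> B) \<inter> space P = Gt t j -` A \<inter> space P \<inter> (U t -` B \<inter> space P)"
      by auto
    also have "emeasure P \<dots> = ennreal (prob (Gt t j -` A \<inter> space P) * prob (U t -` B \<inter> space P))"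
      by (simp add: emeasure_eq_measure UG_indep[OF t j A' B'])
    also have "\<dots> = emeasure ?DG A * emeasure ?DU B"
      using A' B' by (simp add: emeasure_distr emeasure_eq_measure ennreal_mult)
    finally show "emeasure ?DG A * emeasure ?DU B = emeasure ?J (A \<times> B)" by simp
  qed
  define S where "S = {p::real \<times> real. c' - fst p < snd p}"
  have S[measurable]: "S \<in> sets (borel \<Otimes>\<^sub>M borel)"
  proof -
    have "S = {p\<in>space (borel \<Otimes>\<^sub>M borel). c' - fst p < snd p}" by (auto simp: S_def space_pair_measure)
    also have "\<dots> \<in> sets (borel \<Otimes>\<^sub>M borel)" by measurable
    finally show ?thesis .
  qed
  have "prob {\<omega>\<in>space P. c' - Gt t j \<omega> < U t \<omega>} = measure ?J S"
  proof -
    have "measure ?J S = prob ((\<lambda>\<omega>. (Gt t j \<omega>, U t \<omega>)) -` S \<inter> space P)"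
      by (rule measure_distr) (auto simp: S)
    also have "(\<lambda>\<omega>. (Gt t j \<omega>, U t \<omega>)) -` S \<inter> space P = {\<omega>\<in>space P. c' - Gt t j \<omega> < U t \<omega>}"
      by (auto simp: S_def)
    finally show ?thesis by simp
  qed
  also have "\<dots> = enn2real (emeasure (?DG \<Otimes>\<^sub>M ?DU) S)" by (simp add: pe measure_def)
  also have "emeasure (?DG \<Otimes>\<^sub>M ?DU) S = (\<integral>\<^sup>+ x. emeasure ?DU (Pair x -` S) \<partial>?DG)"
    by (rule DU.emeasure_pair_measure_alt) simp
  also have "\<dots> = (\<integral>\<^sup>+ x. ennreal (1 - clp (c' - x)) \<partial>?DG)"
  proof (intro nn_integral_cong)
    fix x
    have "Pair x -` S = {c' - x<..}" by (auto simp: S_def)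
    then have "emeasure ?DU (Pair x -` S) = emeasure P (U t -` {c' - x<..} \<inter> space P)"
      by (simp add: emeasure_distr)
    also have "\<dots> = ennreal (prob {\<omega>\<in>space P. c' - x < U t \<omega>})"
      by (simp add: emeasure_eq_measure vimage_def Int_def conj_commute)
    also have "\<dots> = ennreal (1 - clp (c' - x))" by (simp add: U_prob[OF t])
    finally show "emeasure ?DU (Pair x -` S) = ennreal (1 - clp (c' - x))" .
  qed
  also have "\<dots> = (\<integral>\<^sup>+ \<omega>. ennreal (1 - clp (c' - Gt t j \<omega>)) \<partial>P)"
    by (rule nn_integral_distr) auto
  also have "\<dots> = ennreal (\<integral>\<omega>. 1 - clp (c' - Gt t j \<omega>) \<partial>P)"
  proof (rule nn_integral_eq_integral)
    show "integrable P (\<lambda>\<omega>. 1 - clp (c' - Gt t j \<omega>))"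
      by (rule integrable_const_bound[where B=1]) (auto simp: clp_range intro!: AE_I2 abs_le_iff[THEN iffD2])
    show "AE \<omega> in P. 0 \<le> 1 - clp (c' - Gt t j \<omega>)" by (simp add: clp_range)
  qed
  also have "enn2real \<dots> = (\<integral>\<omega>. 1 - clp (c' - Gt t j \<omega>) \<partial>P)"
    by (rule enn2real_ennreal) (intro integral_nonneg_AE, simp add: clp_range)
  finally show ?thesis .
qed


lemma clp_diff_bound: "\<bar>clp a - clp b\<bar> \<le> 1" by (auto simp: clp_def)

lemma clp_lip: "\<bar>clp a - clp b\<bar> \<le> \<bar>a - b\<bar>" by (auto simp: clp_def)

lemma U_neq: assumes t: "t \<in> {1..n}" and j: "j \<in> {1..m+1}"
  shows "AE \<omega> in P. U t \<omega> \<noteq> 1 - Gt t j \<omega>"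
proof -
  have Gm[measurable]: "Gt t j \<in> borel_measurable P" using t j by simp
  have Um[measurable]: "U t \<in> borel_measurable P" using t by simp
  let ?N = "{\<omega>\<in>space P. U t \<omega> = 1 - Gt t j \<omega>}"
  have v1: "(\<lambda>\<omega>. 1 - Gt t j \<omega>) \<in> borel_measurable P" by (intro borel_measurable_diff Gm) simp
  have Nev: "?N \<in> events" by (rule borel_measurable_eq[OF Um v1])
  have bnd: "prob ?N \<le> 2 * e" if e: "e > 0" for e
  proof -
    let ?A = "{\<omega>\<in>space P. (1 - e) - Gt t j \<omega> < U t \<omega>}"
    let ?B = "{\<omega>\<in>space P. (1 + e) - Gt t j \<omega> < U t \<omega>}"
    have vv: "(\<lambda>\<omega>. c - Gt t j \<omega>) \<in> borel_measurable P" for c by (intro borel_measurable_diff Gm) simp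
    have Aev: "?A \<in> events" by (rule borel_measurable_less[OF vv Um])
    have Bev: "?B \<in> events" by (rule borel_measurable_less[OF vv Um])
    have BA: "?B \<subseteq> ?A" using e by auto
    have NAB: "?N \<subseteq> ?A - ?B" using e by auto
    have "prob ?N \<le> prob (?A - ?B)" using NAB Aev Bev by (intro finite_measure_mono) auto
    also have "\<dots> = prob ?A - prob ?B" using BA Aev Bev by (intro finite_measure_Diff) auto
    also have "\<dots> = (\<integral>\<omega>. 1 - clp ((1 - e) - Gt t j \<omega>) \<partial>P) - (\<integral>\<omega>. 1 - clp ((1 + e) - Gt t j \<omega>) \<partial>P)"
      by (simp add: UG[OF t j])
    also have "\<dots> = (\<integral>\<omega>. clp ((1 + e) - Gt t j \<omega>) - clp ((1 - e) - Gt t j \<omega>) \<partial>P)"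
    proof -
      have i: "integrable P (\<lambda>\<omega>. 1 - clp (c - Gt t j \<omega>))" for c
        by (rule integrable_const_bound[where B=1]) (auto simp: clp_range intro!: AE_I2 abs_le_iff[THEN iffD2])
      show ?thesis using i[of "1 - e"] i[of "1 + e"] by (subst Bochner_Integration.integral_diff[symmetric]) auto
    qed
    also have "\<dots> \<le> (\<integral>\<omega>. 2 * e \<partial>P)"
    proof (rule integral_mono)
      show "integrable P (\<lambda>\<omega>. clp ((1 + e) - Gt t j \<omega>) - clp ((1 - e) - Gt t j \<omega>))"
        by (rule integrable_const_bound[where B=1]) (auto simp: clp_diff_bound intro!: AE_I2)
      fix \<omega> show "clp ((1 + e) - Gt t j \<omega>) - clp ((1 - e) - Gt t j \<omega>) \<le> 2 * e"
        using clp_lip[of "(1 + e) - Gt t j \<omega>" "(1 - e) - Gt t j \<omega>"] e by linarith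
    qed simp
    also have "\<dots> = 2 * e" by (simp add: prob_space)
    finally show ?thesis .
  qed
  have "prob ?N \<le> 0"
  proof (rule field_le_epsilon)
    fix e :: real assume "0 < e"
    then show "prob ?N \<le> 0 + e" using bnd[of "e/2"] by simp
  qed
  then have "prob ?N = 0" using measure_nonneg[of P ?N] by simp
  then show ?thesis by (intro AE_prob0[OF Nev]) simp
qed

lemma viol_eq: assumes t: "t \<in> {1..n}" and j: "j \<in> {1..m+1}"
  shows "AE \<omega> in P. viol L F Gt Ct t j \<omega> = (if 1 - Gt t j \<omega> < U t \<omega> then 1 else 0)"
  using Gt_01[OF t j] U_neq[OF t j]
proof eventually_elim
  case (elim \<omega>)
  define v where "v = 1 - Gt t j \<omega>"
  have v: "0 < v" "v < 1" using elim by (auto simp: v_def)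
  let ?G = "F t (hist L t \<omega>)"
  have c: "cdfc ?G" by (rule F_cdfc[OF t hist_in_space])
  have U: "U t \<omega> = ?G (L t \<omega>)" by (simp add: U_def)
  have ne: "U t \<omega> \<noteq> v" using elim by (simp add: v_def)
  have r: "uquant ?G v < L t \<omega> \<longleftrightarrow> v < U t \<omega>" using uq_char[OF c v] U by simp
  have l: "lquant ?G v < L t \<omega> \<longleftrightarrow> v < U t \<omega>"
    using lq_char1[OF c v, of "L t \<omega>"] lq_char2[OF c v, of "L t \<omega>"] U ne by auto
  show ?case
    by (cases "Ct t j \<omega>") (simp_all add: viol_def r l v_def[symmetric])
qed

lemma viol_meas[measurable]: assumes t: "t \<in> {1..n}" and j: "j \<in> {1..m+1}"
  shows "viol L F Gt Ct t j \<in> borel_measurable P"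
proof -
  have Gm: "Gt t j \<in> borel_measurable P" using t j by simp
  have Cm: "Ct t j \<in> measurable P (count_space UNIV)" using Ct_meas t j by simp
  have H: "hist L t \<in> measurable P (hist_space t)" by (rule hist_meas[OF t L_meas])
  have v: "(\<lambda>\<omega>. 1 - Gt t j \<omega>) \<in> borel_measurable P" by (intro borel_measurable_diff Gm) simp
  define EU where "EU = {\<omega>\<in>space P. uquant (F t (hist L t \<omega>)) (1 - Gt t j \<omega>) < L t \<omega>}"
  define EL where "EL = {\<omega>\<in>space P. lquant (F t (hist L t \<omega>)) (1 - Gt t j \<omega>) < L t \<omega>}"
  have EU: "EU \<in> sets P" unfolding EU_def
    by (rule mUQ[OF F_cdfc[OF t] F_mx[OF t] H L_meas[OF t] v])
  have EL: "EL \<in> sets P" unfolding EL_def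
    by (rule mLQ[OF F_cdfc[OF t] F_mx[OF t] H L_meas[OF t] v])
  define CR where "CR = Ct t j -` {CompR} \<inter> space P"
  have CR: "CR \<in> sets P" unfolding CR_def by (rule measurable_sets[OF Cm]) simp
  define Ev where "Ev = (CR \<inter> EU) \<union> ((space P - CR) \<inter> EL)"
  have Ev: "Ev \<in> sets P" unfolding Ev_def using CR EU EL by auto
  have "(indicator Ev :: 'a \<Rightarrow> real) \<in> borel_measurable P" using Ev by simp
  moreover have "\<omega> \<in> space P \<Longrightarrow> viol L F Gt Ct t j \<omega> = indicator Ev \<omega>" for \<omega>
    by (cases "Ct t j \<omega>") (auto simp: viol_def EU_def EL_def Ev_def CR_def indicator_def)
  ultimately show ?thesis using measurable_cong[of P "viol L F Gt Ct t j" "indicator Ev"] by simp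
qed

lemma viol_exp: assumes t: "t \<in> {1..n}" and j: "j \<in> {1..m+1}"
  shows "expectation (viol L F Gt Ct t j) =
     (\<integral>\<omega>. mixG Gr Gl Gc C \<omega> * indicator {\<alpha> (j - 1)..<\<alpha> j} (mixG Gr Gl Gc C \<omega>) \<partial>P) / (g (\<alpha> j) - g (\<alpha> (j - 1)))"
proof -
  have Gm[measurable]: "Gt t j \<in> borel_measurable P" using t j by simp
  have Um[measurable]: "U t \<in> borel_measurable P" using t by simp
  have "expectation (viol L F Gt Ct t j) = (\<integral>\<omega>. indicator {\<omega>\<in>space P. 1 - Gt t j \<omega> < U t \<omega>} \<omega> \<partial>P)"
    by (rule integral_cong_AE) (use viol_eq[OF t j] viol_meas[OF t j] in \<open>auto simp: indicator_def\<close>)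
  also have "\<dots> = prob {\<omega>\<in>space P. 1 - Gt t j \<omega> < U t \<omega>}" by (simp add: Int_absorb2)
  also have "\<dots> = (\<integral>\<omega>. 1 - clp (1 - Gt t j \<omega>) \<partial>P)" by (rule UG[OF t j])
  also have "\<dots> = (\<integral>\<omega>. Gt t j \<omega> \<partial>P)"
  proof (rule integral_cong_AE)
    have v: "(\<lambda>\<omega>. 1 - Gt t j \<omega>) \<in> borel_measurable P" by (intro borel_measurable_diff Gm) simp
    show "(\<lambda>\<omega>. 1 - clp (1 - Gt t j \<omega>)) \<in> borel_measurable P"
      by (intro borel_measurable_diff measurable_compose[OF v clp_meas]) simp
    show "Gt t j \<in> borel_measurable P" by (rule Gm)
    show "AE \<omega> in P. 1 - clp (1 - Gt t j \<omega>) = Gt t j \<omega>"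
      using Gt_01[OF t j] by eventually_elim (simp add: clp_def)
  qed
  also have "\<dots> = (\<integral>\<omega>. GG \<omega> * indicator (Ij j) (GG \<omega>) \<partial>P) / cj j" by (rule Gt_exp[OF t j])
  finally show ?thesis by (simp add: cj_eq[OF j] GG_def Ij_def)
qed


lemma indep_sets_AE_transfer:
  assumes F: "indep_sets FF I" and Gev: "\<And>i. i \<in> I \<Longrightarrow> GS i \<subseteq> events"
    and ae: "\<And>i A. i \<in> I \<Longrightarrow> A \<in> GS i \<Longrightarrow> \<exists>B\<in>FF i. AE \<omega> in P. (\<omega> \<in> A) = (\<omega> \<in> B)"
  shows "indep_sets GS I"
proof (rule indep_setsI)
  fix i assume "i \<in> I" then show "GS i \<subseteq> events" by (rule Gev)
next
  fix A J assume J: "J \<noteq> {}" "J \<subseteq> I" "finite J" and A: "\<forall>j\<in>J. A j \<in> GS j"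
  have "\<forall>j\<in>J. \<exists>B\<in>FF j. AE \<omega> in P. (\<omega> \<in> A j) = (\<omega> \<in> B)" using A J ae by blast
  then have "\<forall>j\<in>J. \<exists>B. B \<in> FF j \<and> (AE \<omega> in P. (\<omega> \<in> A j) = (\<omega> \<in> B))" by blast
  from bchoice[OF this] obtain B where B: "\<forall>j\<in>J. B j \<in> FF j \<and> (AE \<omega> in P. (\<omega> \<in> A j) = (\<omega> \<in> B j))"
    by (erule exE)
  have FFev: "FF j \<subseteq> events" if "j \<in> J" for j using F J that by (auto simp: indep_sets_def)
  have Aev: "A j \<in> events" if "j \<in> J" for j using A Gev J that by blast
  have Bev: "B j \<in> events" if "j \<in> J" for j using B FFev that by blast
  have pj: "prob (A j) = prob (B j)" if "j \<in> J" for j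
    using B that Aev Bev by (intro finite_measure_eq_AE) auto
  have "AE \<omega> in P. \<forall>j\<in>J. (\<omega> \<in> A j) = (\<omega> \<in> B j)"
    using B J(3) by (subst AE_finite_all) auto
  then have "AE \<omega> in P. (\<omega> \<in> (\<Inter>j\<in>J. A j)) = (\<omega> \<in> (\<Inter>j\<in>J. B j))"
    by eventually_elim auto
  then have "prob (\<Inter>j\<in>J. A j) = prob (\<Inter>j\<in>J. B j)"
    using J Aev Bev by (intro finite_measure_eq_AE) (auto intro!: sets.finite_INT)
  also have "\<dots> = (\<Prod>j\<in>J. prob (B j))" using B J by (intro indep_setsD[OF F]) auto
  also have "\<dots> = (\<Prod>j\<in>J. prob (A j))" using pj by (intro prod.cong) auto
  finally show "prob (\<Inter>j\<in>J. A j) = (\<Prod>j\<in>J. prob (A j))" .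
qed

definition St where "St t = (\<Union>i\<in>{t} \<times> {0..m+1}. E2 i)"

lemma St_sub: "t \<in> {1..n} \<Longrightarrow> St t \<subseteq> Pow (space P)"
  unfolding St_def by (intro UN_least E2_sub) auto

lemma E2_St: "j \<le> m + 1 \<Longrightarrow> E2 (t,j) \<subseteq> St t"
proof -
  assume "j \<le> m + 1"
  then have "(t,j) \<in> {t} \<times> {0..m+1}" by simp
  then show ?thesis unfolding St_def by blast
qed

lemma Sig_indep: "indep_sets (\<lambda>t. sigma_sets (space P) (St t)) {1..n}"
proof -
  have e: "(\<Union>t\<in>{1..n}. {t} \<times> {0..m+1}) = {1..n} \<times> {0..m+1}" by auto
  have R: "indep_sets E2 (\<Union>t\<in>{1..n}. {t} \<times> {0..m+1})" using R1b by (simp only: e)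
  have "indep_sets (\<lambda>t. sigma_sets (space P) (\<Union>i\<in>{t} \<times> {0..m+1}. E2 i)) {1..n}"
    by (rule indep_sets_collect_sigma[OF R]) (auto simp: E2_Int_stable disjoint_family_on_def)
  then show ?thesis by (simp add: St_def)
qed

definition V' where "V' t \<omega> = restrict (\<lambda>j. if 1 - Gt t j \<omega> < U t \<omega> then 1 else 0 :: real) {1..m+1}"

lemma V'_meas: assumes t: "t \<in> {1..n}"
  shows "V' t \<in> measurable (sigma (space P) (St t)) (PiM {1..m+1} (\<lambda>_. borel))"
  unfolding V'_def
proof (rule measurable_restrict)
  fix j assume j: "j \<in> {1..m+1}"
  have sub: "St t \<subseteq> Pow (space P)" by (rule St_sub[OF t])
  have Um: "U t \<in> borel_measurable (sigma (space P) (St t))"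
    by (rule U_sig_meas[OF t E2_St sub]) simp
  have Gm: "Gt t j \<in> borel_measurable (sigma (space P) (St t))"
    by (rule Gt_sig_meas[OF t j E2_St sub]) (use j in simp)
  have v: "(\<lambda>\<omega>. 1 - Gt t j \<omega>) \<in> borel_measurable (sigma (space P) (St t))"
    by (intro borel_measurable_diff Gm) simp
  show "(\<lambda>\<omega>. if 1 - Gt t j \<omega> < U t \<omega> then 1 else 0 :: real) \<in> borel_measurable (sigma (space P) (St t))"
    by (rule measurable_If) (auto intro!: borel_measurable_less[OF v Um])
qed

lemma V_AE: assumes t: "t \<in> {1..n}"
  shows "AE \<omega> in P. restrict (\<lambda>j. viol L F Gt Ct t j \<omega>) {1..m+1} = V' t \<omega>"
proof -
  have "AE \<omega> in P. \<forall>j\<in>{1..m+1}. viol L F Gt Ct t j \<omega> = (if 1 - Gt t j \<omega> < U t \<omega> then 1 else 0)"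
    by (subst AE_finite_all) (use viol_eq[OF t] in blast)+
  then show ?thesis by eventually_elim (auto simp: V'_def restrict_def fun_eq_iff)
qed

lemma main_indep:
  "indep_vars (\<lambda>_. PiM {1..m+1} (\<lambda>_. borel)) (\<lambda>t \<omega>. restrict (\<lambda>j. viol L F Gt Ct t j \<omega>) {1..m+1}) {1..n}"
  unfolding indep_vars_def2
proof (intro conjI ballI)
  fix t assume t: "t \<in> {1..n}"
  show "random_variable (PiM {1..m+1} (\<lambda>_. borel)) (\<lambda>\<omega>. restrict (\<lambda>j. viol L F Gt Ct t j \<omega>) {1..m+1})"
    by (rule measurable_restrict) (rule viol_meas[OF t])
next
  show "indep_sets (\<lambda>t. {(\<lambda>\<omega>. restrict (\<lambda>j. viol L F Gt Ct t j \<omega>) {1..m+1}) -` A \<inter> space P |A. A \<in> sets (PiM {1..m+1} (\<lambda>_. borel))}) {1..n}"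
  proof (rule indep_sets_AE_transfer[OF Sig_indep])
    fix t assume t: "t \<in> {1..n}"
    have rv: "(\<lambda>\<omega>. restrict (\<lambda>j. viol L F Gt Ct t j \<omega>) {1..m+1}) \<in> measurable P (PiM {1..m+1} (\<lambda>_. borel))"
      by (rule measurable_restrict) (rule viol_meas[OF t])
    show "{(\<lambda>\<omega>. restrict (\<lambda>j. viol L F Gt Ct t j \<omega>) {1..m+1}) -` A \<inter> space P |A. A \<in> sets (PiM {1..m+1} (\<lambda>_. borel))} \<subseteq> events"
      using measurable_sets[OF rv] by auto
    fix A assume "A \<in> {(\<lambda>\<omega>. restrict (\<lambda>j. viol L F Gt Ct t j \<omega>) {1..m+1}) -` A \<inter> space P |A. A \<in> sets (PiM {1..m+1} (\<lambda>_. borel))}"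
    then obtain A' where A: "A = (\<lambda>\<omega>. restrict (\<lambda>j. viol L F Gt Ct t j \<omega>) {1..m+1}) -` A' \<inter> space P"
      and A': "A' \<in> sets (PiM {1..m+1} (\<lambda>_. borel))" by blast
    have sub: "St t \<subseteq> Pow (space P)" by (rule St_sub[OF t])
    have "V' t -` A' \<inter> space (sigma (space P) (St t)) \<in> sets (sigma (space P) (St t))"
      by (rule measurable_sets[OF V'_meas[OF t] A'])
    then have B: "V' t -` A' \<inter> space P \<in> sigma_sets (space P) (St t)"
      using sub by (simp add: sets_measure_of space_measure_of_conv)
    have "AE \<omega> in P. (\<omega> \<in> A) = (\<omega> \<in> V' t -` A' \<inter> space P)"
      using V_AE[OF t] AE_space by eventually_elim (auto simp: A)
    then show "\<exists>B\<in>sigma_sets (space P) (St t). AE \<omega> in P. (\<omega> \<in> A) = (\<omega> \<in> B)"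
      using B by blast
  qed
qed

lemma main:
  "(\<forall>t\<in>{1..n}. \<forall>j\<in>{1..m+1}.
            expectation (viol L F Gt Ct t j) =
              (\<integral>\<omega>. mixG Gr Gl Gc C \<omega> * indicator {\<alpha> (j - 1)..<\<alpha> j} (mixG Gr Gl Gc C \<omega>) \<partial>P)
              / (g (\<alpha> j) - g (\<alpha> (j - 1))))
       \<and> indep_vars (\<lambda>_. PiM {1..m+1} (\<lambda>_. borel))
            (\<lambda>t \<omega>. restrict (\<lambda>j. viol L F Gt Ct t j \<omega>) {1..m+1}) {1..n}"
  using viol_exp main_indep by blast

end

theorem lemma3p4:
  fixes P :: "'a measure"
    and n m :: nat
    and L M :: "nat \<Rightarrow> 'a \<Rightarrow> real"
    and F :: "nat \<Rightarrow> (nat \<Rightarrow> real) \<Rightarrow> real \<Rightarrow> real"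
    and g gr gl gc :: "real \<Rightarrow> real"
    and cr cl cc :: real
    and Gr Gl Gc :: "'a \<Rightarrow> real"
    and C :: "'a \<Rightarrow> comp"
    and \<alpha> :: "nat \<Rightarrow> real"
    and Gt :: "nat \<Rightarrow> nat \<Rightarrow> 'a \<Rightarrow> real"
    and Ct :: "nat \<Rightarrow> nat \<Rightarrow> 'a \<Rightarrow> comp"
  assumes P: "prob_space P"
    and n: "n \<ge> 1"
    and LM_meas: "\<And>t. t \<in> {1..n} \<Longrightarrow> L t \<in> borel_measurable P \<and> M t \<in> borel_measurable P"
    and F_cond: "cond_cdf P M n F"
    and F_cont: "\<And>t h. t \<in> {1..n} \<Longrightarrow> h \<in> space (hist_space t) \<Longrightarrow> continuous_on UNIV (F t h)"
    and decomp: "distortion_decomp g cr cl cc gr gl gc"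
    and Gr_meas: "Gr \<in> borel_measurable P"
    and Gl_meas: "Gl \<in> borel_measurable P"
    and Gc_meas: "Gc \<in> borel_measurable P"
    and C_meas: "C \<in> measurable P (count_space UNIV)"
    and Gr_law: "\<And>u. u \<in> {0..1} \<Longrightarrow> measure P {\<omega>\<in>space P. Gr \<omega> \<le> u} = gr u"
    and Gl_law: "\<And>u. u \<in> {0..1} \<Longrightarrow> measure P {\<omega>\<in>space P. Gl \<omega> < u} = gl u"
    and Gc_law: "\<And>u. u \<in> {0..1} \<Longrightarrow> measure P {\<omega>\<in>space P. Gc \<omega> \<le> u} = gc u"
    and C_law: "measure P {\<omega>\<in>space P. C \<omega> = CompR} = cr"
               "measure P {\<omega>\<in>space P. C \<omega> = CompL} = cl"
               "measure P {\<omega>\<in>space P. C \<omega> = CompC} = cc"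
    and indep1: "prob_space.indep_sets P
        (\<lambda>i. case i of
              S1_LM \<Rightarrow> gen_sets P (pathLM n L M) (pathLM_space n)
            | S1_Gr \<Rightarrow> gen_sets P Gr borel
            | S1_Gl \<Rightarrow> gen_sets P Gl borel
            | S1_Gc \<Rightarrow> gen_sets P Gc borel
            | S1_C \<Rightarrow> gen_sets P C (count_space UNIV)) UNIV"
    and alpha0: "\<alpha> 0 = 0"
    and alpha1: "\<alpha> (m + 1) = 1"
    and alpha_mono: "\<And>j. j \<le> m \<Longrightarrow> \<alpha> j < \<alpha> (Suc j)"
    and g_cont: "\<And>j. j \<le> m + 1 \<Longrightarrow> continuous (at (\<alpha> j) within {0..1}) g"
    and g_incr: "\<And>j. j \<in> {1..m+1} \<Longrightarrow> g (\<alpha> j) - g (\<alpha> (j - 1)) \<noteq> 0"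
    and Gt_meas: "\<And>t j. t \<in> {1..n} \<Longrightarrow> j \<in> {1..m+1} \<Longrightarrow> Gt t j \<in> borel_measurable P"
    and Gt_law: "\<And>t j A. t \<in> {1..n} \<Longrightarrow> j \<in> {1..m+1} \<Longrightarrow> A \<in> sets borel \<Longrightarrow>
        measure P (Gt t j -` A \<inter> space P) =
          measure P {\<omega>\<in>space P. mixG Gr Gl Gc C \<omega> \<in> A \<inter> {\<alpha> (j - 1)..<\<alpha> j}}
          / measure P {\<omega>\<in>space P. mixG Gr Gl Gc C \<omega> \<in> {\<alpha> (j - 1)..<\<alpha> j}}"
    and Ct_meas: "\<And>t j. t \<in> {1..n} \<Longrightarrow> j \<in> {1..m+1} \<Longrightarrow> Ct t j \<in> measurable P (count_space UNIV)"
    and Ct_law: "\<And>t j. t \<in> {1..n} \<Longrightarrow> j \<in> {1..m+1} \<Longrightarrow>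
        distr P (count_space UNIV) (Ct t j) = distr P (count_space UNIV) C"
    and indep2: "prob_space.indep_sets P
        (\<lambda>i. case i of
              S2_LM \<Rightarrow> gen_sets P (pathLM n L M) (pathLM_space n)
            | S2_G t j \<Rightarrow> gen_sets P (Gt t j) borel
            | S2_C t j \<Rightarrow> gen_sets P (Ct t j) (count_space UNIV))
        ({S2_LM} \<union> {S2_G t j | t j. t \<in> {1..n} \<and> j \<in> {1..m+1}}
                  \<union> {S2_C t j | t j. t \<in> {1..n} \<and> j \<in> {1..m+1}})"
    and same_law: "distr P (path_space n) (path n M) = distr P (path_space n) (path n L)"
  shows "(\<forall>t\<in>{1..n}. \<forall>j\<in>{1..m+1}.
            prob_space.expectation P (viol L F Gt Ct t j) =
              (\<integral>\<omega>. mixG Gr Gl Gc C \<omega> * indicator {\<alpha> (j - 1)..<\<alpha> j} (mixG Gr Gl Gc C \<omega>) \<partial>P)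
              / (g (\<alpha> j) - g (\<alpha> (j - 1))))
       \<and> prob_space.indep_vars P (\<lambda>_. PiM {1..m+1} (\<lambda>_. borel))
            (\<lambda>t \<omega>. restrict (\<lambda>j. viol L F Gt Ct t j \<omega>) {1..m+1}) {1..n}"
proof -
  interpret Lm P n m L M F g gr gl gc cr cl cc Gr Gl Gc C \<alpha> Gt Ct
    by (rule Lm.intro[OF P Lm_axioms.intro]) (fact assms)+
  show ?thesis by (rule main)
qed


end
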